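(* Let $\mathcal L:\mathbb F^{q\times q}\to\mathbb F^{n\times n}$ be a $*$-linear map with Choi matrix $\mathbb L$ and matricization $L=[L_{ij}]$, and set $m=\operatorname{rank}\mathbb L$. Then: (a) for any matrices $L_1,\ldots,L_m\in\mathbb F^{n\times q}$ with $\operatorname{span}\{L_1,\ldots,L_m\}=\operatorname{span}\{L_{ij}: 1\le i\le n,\ 1\le j\le q\}$, the matrices $A_1,\ldots,A_m$ and $\mathbb H=\mathbb H(\mathcal L;L_1,\ldots,L_m)$ produced by the construction below give a minimal Hill representation $\mathcal L(V)=\sum_{k,l=1}^m \mathbb H_{kl}A_lVA_k^*$ of $\mathcal L$ (for any admissible choice of the scalars $\beta^k_{ij}$); (b) every minimal Hill representation of $\mathcal L$ is obtained in this way from some such $L_1,\ldots,L_m$; (c) the matrices $A_1,\ldots,A_m$ of any minimal Hill representation of $\mathcal L$ satisfy $\operatorname{span}\{A_1,\ldots,A_m\}=\operatorname{span}\{L_{ij}: 1\le i\le n,\ 1\le j\le q\}$; (d) conversely, any $A_1,\ldots,A_m\in\mathbb F^{n\times q}$ satisfying the span identity in (c) appear as the matrices of some minimal Hill representation of $\mathcal L$.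
   Context: $\mathbb F\in\{\mathbb R,\mathbb C\}$. For $T\in\mathbb F^{r\times s}$, $\operatorname{vec}_{r\times s}(T)\in\mathbb F^{rs}$ is the column-stacking vectorization (its $((j-1)r+i)$-th entry is $T_{ij}$). $\mathcal E^{(q)}_{ij}$ denotes the standard basis matrix of $\mathbb F^{q\times q}$ with $1$ in position $(i,j)$. For a linear map $\mathcal L:\mathbb F^{q\times q}\to\mathbb F^{n\times n}$: its matricization is the matrix $L\in\mathbb F^{n^2\times q^2}$ with $L\operatorname{vec}_{q\times q}(V)=\operatorname{vec}_{n\times n}(\mathcal L(V))$ for all $V$, written in block form $L=[L_{ij}]$, $1\le i\le n$, $1\le j\le q$, with blocks $L_{ij}\in\mathbb F^{n\times q}$; its Choi matrix is $\mathbb L=[\mathcal L(\mathcal E^{(q)}_{ij})]_{i,j=1}^q\in\mathbb F^{nq\times nq}$. $\mathcal L$ is $*$-linear if $\mathcal L(V^* )=\mathcal L(V)^*$ for all $V$. A Hill representation of $\mathcal L$ is an identity $\mathcal L(V)=\sum_{k,l=1}^m\mathbb H_{kl}A_lVA_k^*$ for all $V\in\mathbb F^{q\times q}$, with $A_1,\ldots,A_m\in\mathbb F^{n\times q}$ and $\mathbb H=[\mathbb H_{kl}]\in\mathbb F^{m\times m}$ (the Hill matrix); it is minimal if $m$ is the smallest possible among all Hill representations of $\mathcal L$. Construction: given $L_1,\ldots,L_m\in\mathbb F^{n\times q}$ whose span equals $\operatorname{span}\{L_{ij}\}$ (where $m=\operatorname{rank}\mathbb L=\dim\operatorname{span}\{L_{ij}\}$,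 so the $L_k$ are linearly independent), let $\alpha^{ij}_k$ be the unique scalars with $L_{ij}=\sum_{k=1}^m\alpha^{ij}_kL_k$ and let $\beta^k_{ij}$ be any scalars with $L_k=\sum_{i=1}^n\sum_{j=1}^q\beta^k_{ij}L_{ij}$. Set $A_k\in\mathbb F^{n\times q}$ with $(i,j)$ entry $\overline{\alpha^{ij}_k}$, $B_k\in\mathbb F^{n\times q}$ with $(i,j)$ entry $\beta^k_{ij}$, and $\mathbb H(\mathcal L;L_1,\ldots,L_m)=[\vec{\mathbf 1}_n^*(B_k\circ\overline{L_l})\vec{\mathbf 1}_q]_{k,l=1}^m=[\operatorname{trace}(B_kL_l^* )]_{k,l=1}^m$, where $\circ$ is the Hadamard (entrywise) product and $\vec{\mathbf 1}_p$ the all-ones vector in $\mathbb F^p$. *)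

theory Defs
  imports "Jordan_Normal_Form.Matrix" "Jordan_Normal_Form.Schur_Decomposition"
    "Jordan_Normal_Form.DL_Rank"
begin

text \<open>All indices are 0-based.  Matrices are Jordan_Normal_Form matrices over a
  field with an involution (conjugatable_field: covers real with trivial
  conjugation and complex with cnj).\<close>

definition std_mat :: "nat \<Rightarrow> nat \<Rightarrow> nat \<Rightarrow> 'a::zero_neq_one mat" where
  "std_mat p i j = mat p p (\<lambda>(a,b). if a = i \<and> b = j then 1 else 0)"

definition vec_cs :: "'a mat \<Rightarrow> 'a vec" where
  "vec_cs T = vec (dim_row T * dim_col T) (\<lambda>k. T $$ (k mod dim_row T, k div dim_row T))"

definition lin_map :: "nat \<Rightarrow> nat \<Rightarrow> ('a::field mat \<Rightarrow> 'a mat) \<Rightarrow> bool" where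
  "lin_map n q \<L> \<longleftrightarrow>
     (\<forall>V \<in> carrier_mat q q. \<L> V \<in> carrier_mat n n) \<and>
     (\<forall>V \<in> carrier_mat q q. \<forall>W \<in> carrier_mat q q. \<L> (V + W) = \<L> V + \<L> W) \<and>
     (\<forall>c. \<forall>V \<in> carrier_mat q q. \<L> (c \<cdot>\<^sub>m V) = c \<cdot>\<^sub>m \<L> V)"

definition star_linear :: "nat \<Rightarrow> ('a::conjugatable_field mat \<Rightarrow> 'a mat) \<Rightarrow> bool" where
  "star_linear q \<L> \<longleftrightarrow> (\<forall>V \<in> carrier_mat q q. \<L> (mat_adjoint V) = mat_adjoint (\<L> V))"

definition matricization :: "nat \<Rightarrow> nat \<Rightarrow> ('a::field mat \<Rightarrow> 'a mat) \<Rightarrow> 'a mat" where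
  "matricization n q \<L> = (THE L. L \<in> carrier_mat (n*n) (q*q) \<and>
      (\<forall>V \<in> carrier_mat q q. L *\<^sub>v vec_cs V = vec_cs (\<L> V)))"

definition mat_block :: "nat \<Rightarrow> nat \<Rightarrow> ('a::field mat \<Rightarrow> 'a mat) \<Rightarrow> nat \<Rightarrow> nat \<Rightarrow> 'a mat" where
  "mat_block n q \<L> i j = mat n q (\<lambda>(a,c). matricization n q \<L> $$ (i*n + a, j*q + c))"

definition blocks :: "nat \<Rightarrow> nat \<Rightarrow> ('a::field mat \<Rightarrow> 'a mat) \<Rightarrow> 'a mat set" where
  "blocks n q \<L> = {mat_block n q \<L> i j | i j. i < n \<and> j < q}"

text \<open>Choi matrix [L(E_ij)]_{i,j<q}, of size qn x qn (block (i,j) is n x n).\<close>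
definition choi :: "nat \<Rightarrow> nat \<Rightarrow> ('a::field mat \<Rightarrow> 'a mat) \<Rightarrow> 'a mat" where
  "choi n q \<L> = mat (q*n) (q*n)
     (\<lambda>(r,s). \<L> (std_mat q (r div n) (s div n)) $$ (r mod n, s mod n))"

definition mspan :: "nat \<Rightarrow> nat \<Rightarrow> 'a::field mat set \<Rightarrow> 'a mat set" where
  "mspan nr nc S = LinearCombinations.module.span class_ring (module_mat TYPE('a) nr nc) S"

definition hill_rep :: "nat \<Rightarrow> nat \<Rightarrow> ('a::conjugatable_field mat \<Rightarrow> 'a mat)
    \<Rightarrow> nat \<Rightarrow> (nat \<Rightarrow> 'a mat) \<Rightarrow> 'a mat \<Rightarrow> bool" where
  "hill_rep n q \<L> m A H \<longleftrightarrow>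
     (\<forall>k < m. A k \<in> carrier_mat n q) \<and> H \<in> carrier_mat m m \<and>
     (\<forall>V \<in> carrier_mat q q. \<L> V = mat n n (\<lambda>(a,b).
        \<Sum>k<m. \<Sum>l<m. H $$ (k,l) * (A l * V * mat_adjoint (A k)) $$ (a,b)))"

definition minimal_hill_rep :: "nat \<Rightarrow> nat \<Rightarrow> ('a::conjugatable_field mat \<Rightarrow> 'a mat)
    \<Rightarrow> nat \<Rightarrow> (nat \<Rightarrow> 'a mat) \<Rightarrow> 'a mat \<Rightarrow> bool" where
  "minimal_hill_rep n q \<L> m A H \<longleftrightarrow> hill_rep n q \<L> m A H \<and>
     (\<forall>m' A' H'. hill_rep n q \<L> m' A' H' \<longrightarrow> m \<le> m')"

text \<open>Admissible data for the construction: L_1..L_m (n x q) spanning span{L_ij},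
  alpha^{ij}_k (written alpha i j k) with L_ij = sum_k alpha^{ij}_k L_k, and
  beta^k_{ij} (written beta k i j) with L_k = sum_{i,j} beta^k_{ij} L_ij.\<close>
definition constr_data :: "nat \<Rightarrow> nat \<Rightarrow> ('a::field mat \<Rightarrow> 'a mat) \<Rightarrow> nat
    \<Rightarrow> (nat \<Rightarrow> 'a mat) \<Rightarrow> (nat \<Rightarrow> nat \<Rightarrow> nat \<Rightarrow> 'a) \<Rightarrow> (nat \<Rightarrow> nat \<Rightarrow> nat \<Rightarrow> 'a) \<Rightarrow> bool" where
  "constr_data n q \<L> m Lf \<alpha> \<beta> \<longleftrightarrow>
     (\<forall>k < m. Lf k \<in> carrier_mat n q) \<and>
     mspan n q (Lf ` {..<m}) = mspan n q (blocks n q \<L>) \<and>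
     (\<forall>i < n. \<forall>j < q. \<forall>a < n. \<forall>b < q.
        mat_block n q \<L> i j $$ (a,b) = (\<Sum>k<m. \<alpha> i j k * Lf k $$ (a,b))) \<and>
     (\<forall>k < m. \<forall>a < n. \<forall>b < q.
        Lf k $$ (a,b) = (\<Sum>i<n. \<Sum>j<q. \<beta> k i j * mat_block n q \<L> i j $$ (a,b)))"

definition constr_A :: "nat \<Rightarrow> nat \<Rightarrow> (nat \<Rightarrow> nat \<Rightarrow> nat \<Rightarrow> 'a::conjugatable_field) \<Rightarrow> nat \<Rightarrow> 'a mat" where
  "constr_A n q \<alpha> k = mat n q (\<lambda>(i,j). conjugate (\<alpha> i j k))"

definition constr_B :: "nat \<Rightarrow> nat \<Rightarrow> (nat \<Rightarrow> nat \<Rightarrow> nat \<Rightarrow> 'a::field) \<Rightarrow> nat \<Rightarrow> 'a mat" where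
  "constr_B n q \<beta> k = mat n q (\<lambda>(i,j). \<beta> k i j)"

text \<open>H(L; L_1..L_m) = [1_n^* (B_k o conj(L_l)) 1_q]_{k,l} (entrywise sum of the Hadamard product).\<close>
definition constr_H :: "nat \<Rightarrow> nat \<Rightarrow> nat \<Rightarrow> (nat \<Rightarrow> 'a::conjugatable_field mat)
    \<Rightarrow> (nat \<Rightarrow> nat \<Rightarrow> nat \<Rightarrow> 'a) \<Rightarrow> 'a mat" where
  "constr_H n q m Lf \<beta> = mat m m (\<lambda>(k,l). \<Sum>i<n. \<Sum>j<q. constr_B n q \<beta> k $$ (i,j) * conjugate (Lf l $$ (i,j)))"

end

theory Submission
  imports Defs
begin


lemma conj_one[simp]: "conjugate (1::'a::conjugatable_field) = 1"
proof -
  have h: "conjugate (1::'a) = conjugate 1 * conjugate 1"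
    by (metis conjugate_dist_mul mult_1)
  have "conjugate (1::'a) \<noteq> 0" by (metis conjugate_zero_iff one_neq_zero)
  with h show ?thesis by (metis mult_cancel_left1)
qed

lemma conj_diff: "conjugate ((a::'a::conjugatable_field) - b) = conjugate a - conjugate b"
  by (metis conjugate_dist_add conjugate_neg diff_conv_add_uminus)

lemma sum_div_mod: fixes p q :: nat shows "(\<Sum>s<p*q. f s) = (\<Sum>j<p. \<Sum>b<q. f (j*q+b))"
proof -
  have "(\<Sum>s<p*q. f s) = (\<Sum>j<p. sum f {j*q..<j*q+q})" by (rule sum.nat_group[symmetric])
  also have "\<dots> = (\<Sum>j<p. \<Sum>b<q. f (j*q+b))"
  proof (rule sum.cong[OF refl])
    fix j
    have "sum f {j*q..<j*q+q} = sum f {0 + j*q..<q + j*q}" by (simp add: add.commute)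
    also have "\<dots> = (\<Sum>b = 0..<q. f (b + j*q))" by (rule sum.shift_bounds_nat_ivl)
    finally show "sum f {j*q..<j*q+q} = (\<Sum>b<q. f (j*q+b))" by (simp add: atLeast0LessThan add.commute)
  qed
  finally show ?thesis .
qed

lemma sum_div_mod2: fixes p q :: nat shows "(\<Sum>s<p*q. f (s mod q) (s div q)) = (\<Sum>j<p. \<Sum>b<q. f b j)"
  using sum_div_mod[of "\<lambda>s. f (s mod q) (s div q)" p q] by simp

lemma std_mat_carrier[simp]: "std_mat p i j \<in> carrier_mat p p"
  by (simp add: std_mat_def)

lemma std_mat_dims[simp]: "dim_row (std_mat p i j) = p" "dim_col (std_mat p i j) = p"
  by (simp_all add: std_mat_def)

lemma std_mat_index[simp]: "a < p \<Longrightarrow> b < p \<Longrightarrow> std_mat p i j $$ (a,b) = (if a = i \<and> b = j then 1 else 0)"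
  by (simp add: std_mat_def)

lemma adjoint_carrier[simp]: "A \<in> carrier_mat r c \<Longrightarrow> mat_adjoint A \<in> carrier_mat c r"
  by (auto simp: mat_adjoint_def)

lemma adjoint_index: "A \<in> carrier_mat r c \<Longrightarrow> i < c \<Longrightarrow> j < r \<Longrightarrow> mat_adjoint A $$ (i,j) = conjugate (A $$ (j,i))"
  by (auto simp: mat_adjoint_def mat_of_rows_index vec_index_conjugate)

lemma adjoint_std[simp]: "mat_adjoint (std_mat p i j) = (std_mat p j i :: 'a::conjugatable_field mat)"
proof -
  have c: "mat_adjoint (std_mat p i j) \<in> carrier_mat p p" by simp
  show ?thesis by (rule eq_matI) (use c in \<open>auto simp: adjoint_index[of _ p p, OF std_mat_carrier] carrier_matD[OF c]\<close>)
qed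

lemma vec_cs_carrier[simp]: "V \<in> carrier_mat r c \<Longrightarrow> vec_cs V \<in> carrier_vec (r*c)"
  by (auto simp: vec_cs_def)

lemma vec_cs_index: "V \<in> carrier_mat r c \<Longrightarrow> t < r*c \<Longrightarrow> vec_cs V $ t = V $$ (t mod r, t div r)"
  by (auto simp: vec_cs_def)

lemma idx_lt: "i < (r::nat) \<Longrightarrow> j < c \<Longrightarrow> j*r+i < r*c"
proof -
  assume "i < r" "j < c"
  hence "j*r+i < (j+1)*r" by simp
  also have "\<dots> \<le> c*r" using \<open>j < c\<close> by (intro mult_le_mono1) simp
  finally show ?thesis by (simp add: mult.commute)
qed

lemma vec_cs_inj: assumes "V \<in> carrier_mat r c" "W \<in> carrier_mat r c" "vec_cs V = vec_cs W"
  shows "V = W"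
proof (rule eq_matI)
  fix i j assume ij: "i < dim_row W" "j < dim_col W"
  hence t: "j*r+i < r*c" using assms(2) by (simp add: idx_lt)
  have "vec_cs V $ (j*r+i) = vec_cs W $ (j*r+i)" using assms by simp
  moreover have "(j*r+i) mod r = i" "(j*r+i) div r = j" using ij assms(2) by auto
  ultimately show "V $$ (i,j) = W $$ (i,j)" using assms t by (metis vec_cs_index)
qed (use assms in auto)


lemma sum4_swap: "(\<Sum>j\<in>J. \<Sum>b\<in>B. \<Sum>k\<in>K. \<Sum>l\<in>L. f j b k l) = (\<Sum>k\<in>K. \<Sum>l\<in>L. \<Sum>b\<in>B. \<Sum>j\<in>J. f j b k l)"
proof -
  have "(\<Sum>j\<in>J. \<Sum>b\<in>B. \<Sum>k\<in>K. \<Sum>l\<in>L. f j b k l) = (\<Sum>j\<in>J. \<Sum>k\<in>K. \<Sum>b\<in>B. \<Sum>l\<in>L. f j b k l)"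
    by (rule sum.cong[OF refl], rule sum.swap)
  also have "\<dots> = (\<Sum>k\<in>K. \<Sum>j\<in>J. \<Sum>b\<in>B. \<Sum>l\<in>L. f j b k l)" by (rule sum.swap)
  also have "\<dots> = (\<Sum>k\<in>K. \<Sum>j\<in>J. \<Sum>l\<in>L. \<Sum>b\<in>B. f j b k l)"
    by (rule sum.cong[OF refl], rule sum.cong[OF refl], rule sum.swap)
  also have "\<dots> = (\<Sum>k\<in>K. \<Sum>l\<in>L. \<Sum>j\<in>J. \<Sum>b\<in>B. f j b k l)"
    by (rule sum.cong[OF refl], rule sum.swap)
  also have "\<dots> = (\<Sum>k\<in>K. \<Sum>l\<in>L. \<Sum>b\<in>B. \<Sum>j\<in>J. f j b k l)"
    by (rule sum.cong[OF refl], rule sum.cong[OF refl], rule sum.swap)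
  finally show ?thesis .
qed

lemma mod_div_lt: "(r::nat) < n*m \<Longrightarrow> r mod n < n \<and> r div n < m"
proof -
  assume r: "r < n*m"
  hence "n > 0" by (cases n) auto
  thus ?thesis using r by (simp add: less_mult_imp_div_less mult.commute)
qed

lemma lin_zero: assumes "lin_map n q \<L>" shows "\<L> (0\<^sub>m q q) = 0\<^sub>m n n"
proof -
  have c: "\<L> (0\<^sub>m q q) \<in> carrier_mat n n" using assms by (auto simp: lin_map_def)
  have e: "\<L> (0 \<cdot>\<^sub>m 0\<^sub>m q q) = 0 \<cdot>\<^sub>m \<L> (0\<^sub>m q q)" using assms zero_carrier_mat[of q q] unfolding lin_map_def by blast
  have "\<L> (0\<^sub>m q q) = \<L> (0 \<cdot>\<^sub>m 0\<^sub>m q q)" by simp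
  also have "\<dots> = 0 \<cdot>\<^sub>m \<L> (0\<^sub>m q q)" by (rule e)
  also have "\<dots> = 0\<^sub>m n n" using c by (intro eq_matI) auto
  finally show ?thesis .
qed

definition trunc :: "nat \<Rightarrow> 'a::field mat \<Rightarrow> nat \<Rightarrow> 'a mat" where
  "trunc q V t = mat q q (\<lambda>(b,j). if j*q+b < t then V $$ (b,j) else 0)"

lemma trunc_carrier[simp]: "trunc q V t \<in> carrier_mat q q" by (simp add: trunc_def)

lemma trunc_0: "trunc q V 0 = 0\<^sub>m q q" by (intro eq_matI) (auto simp: trunc_def)

lemma trunc_full: "V \<in> carrier_mat q q \<Longrightarrow> trunc q V (q*q) = V"
  by (intro eq_matI) (auto simp: trunc_def idx_lt)

lemma trunc_Suc: assumes "t < q*q"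
  shows "trunc q V (Suc t) = trunc q V t + V $$ (t mod q, t div q) \<cdot>\<^sub>m std_mat q (t mod q) (t div q)"
proof (rule eq_matI)
  fix b j assume bj: "b < dim_row (trunc q V t + V $$ (t mod q, t div q) \<cdot>\<^sub>m std_mat q (t mod q) (t div q))"
     "j < dim_col (trunc q V t + V $$ (t mod q, t div q) \<cdot>\<^sub>m std_mat q (t mod q) (t div q))"
  hence b: "b < q" and j: "j < q" by (simp_all add: trunc_def)
  have eq: "(j*q+b = t) = (b = t mod q \<and> j = t div q)"
  proof
    assume "j*q+b = t" thus "b = t mod q \<and> j = t div q" using b by auto
  next
    assume "b = t mod q \<and> j = t div q" thus "j*q+b = t" by (simp add: mult.commute)
  qed
  have lhs: "trunc q V (Suc t) $$ (b,j) = (if j*q+b < Suc t then V$$(b,j) else 0)"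
    using b j by (simp add: trunc_def)
  have rhs: "(trunc q V t + V $$ (t mod q, t div q) \<cdot>\<^sub>m std_mat q (t mod q) (t div q)) $$ (b,j)
     = (if j*q+b < t then V$$(b,j) else 0) + V$$(t mod q, t div q) * (if b = t mod q \<and> j = t div q then 1 else 0)"
    using b j by (simp add: trunc_def)
  show "trunc q V (Suc t) $$ (b,j) = (trunc q V t + V $$ (t mod q, t div q) \<cdot>\<^sub>m std_mat q (t mod q) (t div q)) $$ (b,j)"
  proof (cases "j*q+b = t")
    case True
    then show ?thesis unfolding lhs rhs using eq by simp
  next
    case False
    hence "(j*q+b < Suc t) = (j*q+b < t)" by auto
    moreover have "\<not>(b = t mod q \<and> j = t div q)" using eq False by blast
    ultimately show ?thesis unfolding lhs rhs by auto
  qed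
qed (auto simp: trunc_def)

lemma expand: assumes lin: "lin_map n q \<L>" and V: "V \<in> carrier_mat q q" and x: "x < n" and y: "y < n"
  shows "\<L> V $$ (x,y) = (\<Sum>s<q*q. V $$ (s mod q, s div q) * \<L> (std_mat q (s mod q) (s div q)) $$ (x,y))"
proof -
  have add: "\<And>X Y. X \<in> carrier_mat q q \<Longrightarrow> Y \<in> carrier_mat q q \<Longrightarrow> \<L> (X + Y) = \<L> X + \<L> Y"
    and sm: "\<And>c X. X \<in> carrier_mat q q \<Longrightarrow> \<L> (c \<cdot>\<^sub>m X) = c \<cdot>\<^sub>m \<L> X"
    and car: "\<And>X. X \<in> carrier_mat q q \<Longrightarrow> \<L> X \<in> carrier_mat n n" using lin by (auto simp: lin_map_def)
  have "t \<le> q*q \<Longrightarrow> \<L> (trunc q V t) $$ (x,y) = (\<Sum>s<t. V $$ (s mod q, s div q) * \<L> (std_mat q (s mod q) (s div q)) $$ (x,y))" for t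
  proof (induction t)
    case 0
    then show ?case using x y by (simp add: trunc_0 lin_zero[OF lin])
  next
    case (Suc t)
    have "\<L> (trunc q V (Suc t)) = \<L> (trunc q V t) + V $$ (t mod q, t div q) \<cdot>\<^sub>m \<L> (std_mat q (t mod q) (t div q))"
      using Suc.prems by (simp add: trunc_Suc add sm)
    then show ?case using Suc x y car[of "trunc q V t"] car[of "std_mat q (t mod q) (t div q)"] by simp
  qed
  from this[of "q*q"] show ?thesis by (simp add: trunc_full[OF V])
qed

definition Kmat :: "nat \<Rightarrow> nat \<Rightarrow> ('a::field mat \<Rightarrow> 'a mat) \<Rightarrow> 'a mat" where
  "Kmat n q \<L> = mat (n*n) (q*q) (\<lambda>(r,s). \<L> (std_mat q (s mod q) (s div q)) $$ (r mod n, r div n))"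

lemma vec_cs_std: assumes "s < q*q"
  shows "vec_cs (std_mat q (s mod q) (s div q) :: 'a::field mat) = unit_vec (q*q) s"
proof (rule eq_vecI)
  fix t assume t: "t < dim_vec (unit_vec (q*q) s :: 'a vec)"
  hence t': "t < q*q" by simp
  have "(t mod q = s mod q \<and> t div q = s div q) = (t = s)" by (metis div_mult_mod_eq)
  moreover have "t mod q < q" "t div q < q" using mod_div_lt[OF t'] by auto
  ultimately show "vec_cs (std_mat q (s mod q) (s div q) :: 'a mat) $ t = unit_vec (q*q) s $ t"
    using t' assms by (simp add: vec_cs_index[of _ q q] unit_vec_def)
qed (simp add: vec_cs_def)

lemma matricization_eq: assumes lin: "lin_map n q \<L>"
  shows "matricization n q \<L> = Kmat n q \<L>"
  unfolding matricization_def
proof (rule the1_equality)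
  have car: "\<And>X. X \<in> carrier_mat q q \<Longrightarrow> \<L> X \<in> carrier_mat n n" using lin by (auto simp: lin_map_def)
  have P: "Kmat n q \<L> \<in> carrier_mat (n*n) (q*q) \<and> (\<forall>V \<in> carrier_mat q q. Kmat n q \<L> *\<^sub>v vec_cs V = vec_cs (\<L> V))"
  proof (intro conjI ballI)
    show "Kmat n q \<L> \<in> carrier_mat (n*n) (q*q)" by (simp add: Kmat_def)
    fix V :: "'a mat" assume V: "V \<in> carrier_mat q q"
    show "Kmat n q \<L> *\<^sub>v vec_cs V = vec_cs (\<L> V)"
    proof (rule eq_vecI)
      fix r assume "r < dim_vec (vec_cs (\<L> V))"
      hence r: "r < n*n" using car[OF V] by (simp add: vec_cs_def)
      hence rm: "r mod n < n" "r div n < n" using mod_div_lt[OF r] by auto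
      have "(Kmat n q \<L> *\<^sub>v vec_cs V) $ r = (\<Sum>s<q*q. Kmat n q \<L> $$ (r,s) * vec_cs V $ s)"
        using r V by (simp add: Kmat_def scalar_prod_def atLeast0LessThan vec_cs_def)
      also have "\<dots> = (\<Sum>s<q*q. V $$ (s mod q, s div q) * \<L> (std_mat q (s mod q) (s div q)) $$ (r mod n, r div n))"
        using r V by (intro sum.cong) (auto simp: Kmat_def vec_cs_index)
      also have "\<dots> = \<L> V $$ (r mod n, r div n)" using expand[OF lin V rm] by simp
      also have "\<dots> = vec_cs (\<L> V) $ r" using car[OF V] r by (simp add: vec_cs_index)
      finally show "(Kmat n q \<L> *\<^sub>v vec_cs V) $ r = vec_cs (\<L> V) $ r" .
    qed (use car[OF V] in \<open>simp add: Kmat_def vec_cs_def\<close>)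
  qed
  show "\<exists>!L. L \<in> carrier_mat (n*n) (q*q) \<and> (\<forall>V\<in>carrier_mat q q. L *\<^sub>v vec_cs V = vec_cs (\<L> V))"
  proof (rule ex1I[of _ "Kmat n q \<L>"])
    show "Kmat n q \<L> \<in> carrier_mat (n*n) (q*q) \<and> (\<forall>V \<in> carrier_mat q q. Kmat n q \<L> *\<^sub>v vec_cs V = vec_cs (\<L> V))" by (rule P)
    fix L' assume L': "L' \<in> carrier_mat (n*n) (q*q) \<and> (\<forall>V\<in>carrier_mat q q. L' *\<^sub>v vec_cs V = vec_cs (\<L> V))"
    show "L' = Kmat n q \<L>"
    proof (rule eq_matI)
      fix r s assume rs: "r < dim_row (Kmat n q \<L>)" "s < dim_col (Kmat n q \<L>)"
      hence r: "r < n*n" and s: "s < q*q" by (auto simp: Kmat_def)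
      let ?E = "std_mat q (s mod q) (s div q) :: 'a mat"
      have "L' *\<^sub>v vec_cs ?E = vec_cs (\<L> ?E)" using L' by simp
      hence "(L' *\<^sub>v unit_vec (q*q) s) $ r = vec_cs (\<L> ?E) $ r" by (simp add: vec_cs_std[OF s])
      moreover have "(L' *\<^sub>v unit_vec (q*q) s) $ r = L' $$ (r,s)"
      proof -
        have Lc: "L' \<in> carrier_mat (n*n) (q*q)" using L' by blast
        have "(L' *\<^sub>v unit_vec (q*q) s) $ r = row L' r \<bullet> unit_vec (q*q) s" using Lc r by auto
        also have "\<dots> = row L' r $ s" using Lc s by (intro scalar_prod_right_unit) auto
        also have "\<dots> = L' $$ (r,s)" using Lc r s by auto
        finally show ?thesis .
      qed
      moreover have "vec_cs (\<L> ?E) $ r = Kmat n q \<L> $$ (r,s)"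
        using car[of ?E] r s by (simp add: vec_cs_index Kmat_def)
      ultimately show "L' $$ (r,s) = Kmat n q \<L> $$ (r,s)" by simp
    qed (use L' in \<open>auto simp: Kmat_def\<close>)
  qed
  show "Kmat n q \<L> \<in> carrier_mat (n*n) (q*q) \<and> (\<forall>V \<in> carrier_mat q q. Kmat n q \<L> *\<^sub>v vec_cs V = vec_cs (\<L> V))" by (rule P)
qed


definition Tt :: "('a::field mat \<Rightarrow> 'a mat) \<Rightarrow> nat \<Rightarrow> nat \<Rightarrow> nat \<Rightarrow> nat \<Rightarrow> nat \<Rightarrow> 'a" where
  "Tt \<L> q i j a b = \<L> (std_mat q b j) $$ (a,i)"

lemma block_carrier[simp]: "mat_block n q \<L> i j \<in> carrier_mat n q"
  by (simp add: mat_block_def)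

lemma block_dims[simp]: "dim_row (mat_block n q \<L> i j) = n" "dim_col (mat_block n q \<L> i j) = q"
  by (simp_all add: mat_block_def)

lemma delta2: assumes "(b::nat) < q" "(j::nat) < q"
  shows "(\<Sum>b'<q. \<Sum>j'<q. if b' = b \<and> j' = j then c else 0) = c"
proof -
  have "\<And>b'. (\<Sum>j'<q. if b' = b \<and> j' = j then c else 0) = (if b' = b then c else 0)"
    subgoal for b' using assms by (cases "b' = b") (simp_all add: sum.delta)
    done
  hence "(\<Sum>b'<q. \<Sum>j'<q. if b' = b \<and> j' = j then c else 0) = (\<Sum>b'<q. if b' = b then c else 0)" by simp
  also have "\<dots> = c" using assms by (simp add: sum.delta)
  finally show ?thesis .
qed

lemma block_entry: assumes "lin_map n q \<L>" "i < n" "j < q" "a < n" "b < q"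
  shows "mat_block n q \<L> i j $$ (a,b) = Tt \<L> q i j a b"
proof -
  have "i*n+a < n*n" "j*q+b < q*q" using assms by (auto simp: idx_lt)
  thus ?thesis using assms by (simp add: mat_block_def matricization_eq Kmat_def Tt_def)
qed

lemma herm: assumes lin: "lin_map n q \<L>" and st: "star_linear q \<L>" and "i < n" "j < q" "a < n" "b < q"
  shows "Tt \<L> q a b i j = conjugate (Tt \<L> q i j a b)"
proof -
  have c: "\<L> (std_mat q b j) \<in> carrier_mat n n" using lin by (simp add: lin_map_def)
  have "Tt \<L> q a b i j = \<L> (mat_adjoint (std_mat q b j)) $$ (i,a)" by (simp add: Tt_def)
  also have "\<dots> = mat_adjoint (\<L> (std_mat q b j)) $$ (i,a)"
    using st std_mat_carrier[of q b j] unfolding star_linear_def by metis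
  also have "\<dots> = conjugate (\<L> (std_mat q b j) $$ (a,i))" using c assms by (simp add: adjoint_index)
  finally show ?thesis by (simp add: Tt_def)
qed

lemma choi_col: assumes lin: "lin_map n q \<L>" and s: "s < q*n"
  shows "col (choi n q \<L>) s = vec_cs (mat_block n q \<L> (s mod n) (s div n))"
proof (rule eq_vecI)
  have sm: "s mod n < n" "s div n < q" using mod_div_lt[of s n q] s by (auto simp: mult.commute)
  fix r assume "r < dim_vec (vec_cs (mat_block n q \<L> (s mod n) (s div n)))"
  hence r: "r < n*q" by (simp add: vec_cs_def)
  have rm: "r mod n < n" "r div n < q" using mod_div_lt[OF r] by auto
  have "col (choi n q \<L>) s $ r = \<L> (std_mat q (r div n) (s div n)) $$ (r mod n, s mod n)"
    using r s by (simp add: choi_def mult.commute)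
  also have "\<dots> = mat_block n q \<L> (s mod n) (s div n) $$ (r mod n, r div n)"
    using block_entry[OF lin sm rm] by (simp add: Tt_def)
  also have "\<dots> = vec_cs (mat_block n q \<L> (s mod n) (s div n)) $ r" using r by (simp add: vec_cs_index[of _ n q])
  finally show "col (choi n q \<L>) s $ r = vec_cs (mat_block n q \<L> (s mod n) (s div n)) $ r" .
qed (simp add: choi_def vec_cs_def mult.commute)

lemma mult_entry: assumes A: "A \<in> carrier_mat r k" and B: "B \<in> carrier_mat k c" and i: "i < r" and j: "j < c"
  shows "(A*B) $$ (i,j) = (\<Sum>t<k. A$$(i,t) * B$$(t,j))"
proof -
  have "(A*B) $$ (i,j) = row A i \<bullet> col B j" using A B i j by (intro index_mult_mat) auto
  also have "\<dots> = (\<Sum>t\<in>{0..<k}. row A i $ t * col B j $ t)" using B by (simp add: scalar_prod_def)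
  also have "\<dots> = (\<Sum>t<k. A$$(i,t) * B$$(t,j))"
    by (rule sum.cong) (use A B i j in \<open>auto simp: atLeast0LessThan\<close>)
  finally show ?thesis .
qed

lemma prod_entry: assumes A: "A \<in> carrier_mat n q" and B: "B \<in> carrier_mat n q" and V: "V \<in> carrier_mat q q"
  and x: "x < n" and y: "y < n"
  shows "(A * V * mat_adjoint B) $$ (x,y) = (\<Sum>b<q. \<Sum>j<q. A$$(x,b) * V$$(b,j) * conjugate (B$$(y,j)))"
proof -
  have AV: "A * V \<in> carrier_mat n q" using A V by simp
  have aB: "mat_adjoint B \<in> carrier_mat q n" using B by simp
  have "(A * V * mat_adjoint B) $$ (x,y) = (\<Sum>j<q. (A*V) $$ (x,j) * mat_adjoint B $$ (j,y))"
    by (rule mult_entry[OF AV aB x y])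
  also have "\<dots> = (\<Sum>j<q. (\<Sum>b<q. A$$(x,b) * V$$(b,j)) * conjugate (B$$(y,j)))"
  proof (rule sum.cong[OF refl])
    fix j assume "j \<in> {..<q}" hence j: "j < q" by simp
    show "(A*V) $$ (x,j) * mat_adjoint B $$ (j,y) = (\<Sum>b<q. A$$(x,b) * V$$(b,j)) * conjugate (B$$(y,j))"
      using mult_entry[OF A V x j] adjoint_index[OF B j y] by simp
  qed
  also have "\<dots> = (\<Sum>j<q. \<Sum>b<q. A$$(x,b) * V$$(b,j) * conjugate (B$$(y,j)))"
    by (simp add: sum_distrib_right)
  also have "\<dots> = (\<Sum>b<q. \<Sum>j<q. A$$(x,b) * V$$(b,j) * conjugate (B$$(y,j)))"
    by (rule sum.swap)
  finally show ?thesis .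
qed

lemma hill_iff: assumes lin: "lin_map n q \<L>"
  shows "hill_rep n q \<L> m A H \<longleftrightarrow> (\<forall>k<m. A k \<in> carrier_mat n q) \<and> H \<in> carrier_mat m m \<and>
    (\<forall>i<n. \<forall>j<q. \<forall>a<n. \<forall>b<q. Tt \<L> q i j a b =
       (\<Sum>k<m. \<Sum>l<m. H$$(k,l) * (conjugate (A k $$ (i,j)) * A l $$ (a,b))))"
proof -
  have car: "\<And>X. X \<in> carrier_mat q q \<Longrightarrow> \<L> X \<in> carrier_mat n n" using lin by (auto simp: lin_map_def)
  show ?thesis
  proof
    assume h: "hill_rep n q \<L> m A H"
    hence Ac: "\<forall>k<m. A k \<in> carrier_mat n q" and Hc: "H \<in> carrier_mat m m"
      and eq: "\<And>V. V \<in> carrier_mat q q \<Longrightarrow> \<L> V = mat n n (\<lambda>(a,b). \<Sum>k<m. \<Sum>l<m. H $$ (k,l) * (A l * V * mat_adjoint (A k)) $$ (a,b))"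
      by (auto simp: hill_rep_def)
    show "(\<forall>k<m. A k \<in> carrier_mat n q) \<and> H \<in> carrier_mat m m \<and>
    (\<forall>i<n. \<forall>j<q. \<forall>a<n. \<forall>b<q. Tt \<L> q i j a b =
       (\<Sum>k<m. \<Sum>l<m. H$$(k,l) * (conjugate (A k $$ (i,j)) * A l $$ (a,b))))"
    proof (intro conjI Ac Hc allI impI)
      fix i j a b assume ij: "i < n" "j < q" "a < n" "b < q"
      have "Tt \<L> q i j a b = (\<Sum>k<m. \<Sum>l<m. H $$ (k,l) * (A l * std_mat q b j * mat_adjoint (A k)) $$ (a,i))"
        using eq[OF std_mat_carrier] ij by (simp add: Tt_def)
      also have "\<dots> = (\<Sum>k<m. \<Sum>l<m. H$$(k,l) * (conjugate (A k $$ (i,j)) * A l $$ (a,b)))"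
      proof (intro sum.cong refl)
        fix k l assume kl: "k \<in> {..<m}" "l \<in> {..<m}"
        have "(A l * std_mat q b j * mat_adjoint (A k)) $$ (a,i) =
           (\<Sum>b'<q. \<Sum>j'<q. A l $$(a,b') * std_mat q b j $$(b',j') * conjugate (A k $$(i,j')))"
          using kl Ac ij by (intro prod_entry) auto
        also have "\<dots> = (\<Sum>b'<q. \<Sum>j'<q. if b' = b \<and> j' = j then A l $$(a,b) * conjugate (A k $$(i,j)) else 0)"
          by (intro sum.cong refl) auto
        also have "\<dots> = A l $$(a,b) * conjugate (A k $$(i,j))"
          by (rule delta2[OF \<open>b < q\<close> \<open>j < q\<close>])
        finally show "H $$ (k,l) * (A l * std_mat q b j * mat_adjoint (A k)) $$ (a,i) =
          H$$(k,l) * (conjugate (A k $$ (i,j)) * A l $$ (a,b))" by (simp add: ac_simps)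
      qed
      finally show "Tt \<L> q i j a b = (\<Sum>k<m. \<Sum>l<m. H$$(k,l) * (conjugate (A k $$ (i,j)) * A l $$ (a,b)))" .
    qed
  next
    assume h: "(\<forall>k<m. A k \<in> carrier_mat n q) \<and> H \<in> carrier_mat m m \<and>
    (\<forall>i<n. \<forall>j<q. \<forall>a<n. \<forall>b<q. Tt \<L> q i j a b =
       (\<Sum>k<m. \<Sum>l<m. H$$(k,l) * (conjugate (A k $$ (i,j)) * A l $$ (a,b))))"
    hence Ac: "\<forall>k<m. A k \<in> carrier_mat n q" and Hc: "H \<in> carrier_mat m m"
      and T: "\<And>i j a b. i<n \<Longrightarrow> j<q \<Longrightarrow> a<n \<Longrightarrow> b<q \<Longrightarrow> Tt \<L> q i j a b =
       (\<Sum>k<m. \<Sum>l<m. H$$(k,l) * (conjugate (A k $$ (i,j)) * A l $$ (a,b)))" by auto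
    show "hill_rep n q \<L> m A H" unfolding hill_rep_def
    proof (intro conjI Ac Hc ballI)
      fix V :: "'a mat" assume V: "V \<in> carrier_mat q q"
      show "\<L> V = mat n n (\<lambda>(a,b). \<Sum>k<m. \<Sum>l<m. H $$ (k,l) * (A l * V * mat_adjoint (A k)) $$ (a,b))"
      proof (rule eq_matI)
        fix x y assume "x < dim_row (mat n n (\<lambda>(a,b). \<Sum>k<m. \<Sum>l<m. H $$ (k,l) * (A l * V * mat_adjoint (A k)) $$ (a,b)))"
          "y < dim_col (mat n n (\<lambda>(a,b). \<Sum>k<m. \<Sum>l<m. H $$ (k,l) * (A l * V * mat_adjoint (A k)) $$ (a,b)))"
        hence x: "x < n" and y: "y < n" by auto
        have "\<L> V $$ (x,y) = (\<Sum>s<q*q. V $$ (s mod q, s div q) * \<L> (std_mat q (s mod q) (s div q)) $$ (x,y))"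
          by (rule expand[OF lin V x y])
        also have "\<dots> = (\<Sum>j<q. \<Sum>b<q. V $$ (b,j) * Tt \<L> q y j x b)"
          by (subst sum_div_mod2[of "\<lambda>b j. V $$ (b, j) * \<L> (std_mat q b j) $$ (x, y)"]) (simp add: Tt_def)
        also have "\<dots> = (\<Sum>j<q. \<Sum>b<q. \<Sum>k<m. \<Sum>l<m. H$$(k,l) * (A l $$ (x,b) * V $$ (b,j) * conjugate (A k $$ (y,j))))"
          using x y by (intro sum.cong refl) (simp add: T sum_distrib_left ac_simps)
        also have "\<dots> = (\<Sum>k<m. \<Sum>l<m. \<Sum>b<q. \<Sum>j<q. H$$(k,l) * (A l $$ (x,b) * V $$ (b,j) * conjugate (A k $$ (y,j))))"
          by (rule sum4_swap)
        also have "\<dots> = (\<Sum>k<m. \<Sum>l<m. H $$ (k,l) * (A l * V * mat_adjoint (A k)) $$ (x,y))"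
        proof (intro sum.cong refl)
          fix k l assume "k \<in> {..<m}" "l \<in> {..<m}"
          hence "A k \<in> carrier_mat n q" "A l \<in> carrier_mat n q" using Ac by auto
          from prod_entry[OF this(2) this(1) V x y]
          show "(\<Sum>b<q. \<Sum>j<q. H$$(k,l) * (A l $$ (x,b) * V $$ (b,j) * conjugate (A k $$ (y,j)))) =
             H $$ (k,l) * (A l * V * mat_adjoint (A k)) $$ (x,y)" by (simp add: sum_distrib_left ac_simps)
        qed
        finally show "\<L> V $$ (x,y) = mat n n (\<lambda>(a,b). \<Sum>k<m. \<Sum>l<m. H $$ (k,l) * (A l * V * mat_adjoint (A k)) $$ (a,b)) $$ (x,y)"
          using x y by simp
      qed (use car[OF V] in auto)
    qed
  qed
qed


context vectorspace begin

lemma li_le_span_card: assumes "finite A" "finite B" "B \<subseteq> carrier V" "lin_indpt A" "A \<subseteq> span B"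
  shows "card A \<le> card B"
proof -
  from replacement[OF assms] obtain C where C: "finite C \<and> C\<subseteq>carrier V \<and> C\<subseteq>span B \<and> C\<inter>A={} \<and> int (card C) \<le> int (card B) - int (card A) \<and> span (A \<union> C) = span B"
    by (erule exE)
  hence "int (card C) \<le> int (card B) - int (card A)" by (rule conjunct2[THEN conjunct2, THEN conjunct2, THEN conjunct2, THEN conjunct1])
  thus ?thesis by linarith
qed

lemma span_eq_card: assumes "finite A" "finite B" "B \<subseteq> carrier V" "lin_indpt A" "A \<subseteq> span B"
  "card B \<le> card A"
  shows "span A = span B"
proof -
  from replacement[OF assms(1-5)] obtain C where C: "finite C \<and> C\<subseteq>carrier V \<and> C\<subseteq>span B \<and> C\<inter>A={} \<and> int (card C) \<le> int (card B) - int (card A) \<and> span (A \<union> C) = span B"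
    by (erule exE)
  have C1: "finite C" using C by (rule conjunct1)
  have C2: "int (card C) \<le> int (card B) - int (card A)" using C by (rule conjunct2[THEN conjunct2, THEN conjunct2, THEN conjunct2, THEN conjunct1])
  have C3: "span (A \<union> C) = span B" using C by (rule conjunct2[THEN conjunct2, THEN conjunct2, THEN conjunct2, THEN conjunct2])
  have "card C = 0" using C2 assms(6) by linarith
  hence "C = {}" using C1 by simp
  thus ?thesis using C3 by simp
qed

lemma basis_subset: assumes fin: "finite X" and X: "X \<subseteq> carrier V"
  shows "\<exists>U \<subseteq> X. lin_indpt U \<and> span U = span X \<and> card U = vectorspace.dim K (span_vs X)"
proof -
  have e: "lin_indpt {}" unfolding lin_dep_def by auto
  obtain U where U: "finite U" "maximal U (\<lambda>T. T \<subseteq> X \<and> lin_indpt T)"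
    using maximal_exists_superset[of X "\<lambda>T. T \<subseteq> X \<and> lin_indpt T" "{}"] fin e by blast
  have UX: "U \<subseteq> X" and Ui: "lin_indpt U" using U(2) by (auto simp: maximal_def)
  have Uc: "U \<subseteq> carrier V" using UX X by auto
  have d: "vectorspace.dim K (span_vs X) = card U" by (rule dim_span[OF X fin U(2)])
  have XU: "X \<subseteq> span U"
  proof
    fix x assume x: "x \<in> X"
    show "x \<in> span U"
    proof (cases "x \<in> U")
      case True thus ?thesis using in_own_span[OF Uc] by auto
    next
      case False
      show ?thesis
      proof (rule ccontr)
        assume "x \<notin> span U"
        hence "lin_indpt (U \<union> {x})" using lin_dep_iff_in_span[OF Uc Ui _ False] x X by auto
        moreover have "U \<union> {x} \<subseteq> X" using UX x by auto
        ultimately have "U \<union> {x} = U" using U(2) unfolding maximal_def by blast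
        thus False using False by auto
      qed
    qed
  qed
  have "span U = span X"
  proof
    show "span U \<subseteq> span X" using UX by (rule span_is_monotone)
    show "span X \<subseteq> span U" using XU span_is_submodule[OF Uc] by (rule span_is_subset)
  qed
  thus ?thesis using UX Ui d by auto
qed

end

definition mcomb :: "nat \<Rightarrow> nat \<Rightarrow> (nat \<Rightarrow> 'a::field) \<Rightarrow> (nat \<Rightarrow> 'a mat) \<Rightarrow> nat set \<Rightarrow> 'a mat" where
  "mcomb nr nc c g I = mat nr nc (\<lambda>(a,b). \<Sum>i\<in>I. c i * g i $$ (a,b))"

definition mindep :: "nat \<Rightarrow> nat \<Rightarrow> (nat \<Rightarrow> 'a::field mat) \<Rightarrow> nat set \<Rightarrow> bool" where
  "mindep nr nc g I \<longleftrightarrow> (\<forall>c. mcomb nr nc c g I = 0\<^sub>m nr nc \<longrightarrow> (\<forall>i\<in>I. c i = 0))"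

lemma mcomb_carrier[simp]: "mcomb nr nc c g I \<in> carrier_mat nr nc" by (simp add: mcomb_def)

lemma mcomb_index: "a < nr \<Longrightarrow> b < nc \<Longrightarrow> mcomb nr nc c g I $$ (a,b) = (\<Sum>i\<in>I. c i * g i $$ (a,b))"
  by (simp add: mcomb_def)

context matrix_vs begin

lemma finsum_mat_index: assumes "finite A" "f \<in> A \<rightarrow> carrier_mat nr nc" "i < nr" "j < nc"
  shows "finsum V f A $$ (i,j) = (\<Sum>x\<in>A. f x $$ (i,j))"
  using assms(1,2)
proof (induction A rule: finite_induct)
  case empty
  then show ?case using assms(3,4) by simp
next
  case (insert a F)
  have fF: "f \<in> F \<rightarrow> carrier_mat nr nc" and fa: "f a \<in> carrier_mat nr nc" using insert.prems by auto
  have "finsum V f (insert a F) = f a + finsum V f F"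
    using finsum_insert[OF insert.hyps(1,2) fF fa] by simp
  moreover have c: "finsum V f F \<in> carrier_mat nr nc" using finsum_closed[OF fF] by simp
  moreover have "(f a + finsum V f F) $$ (i,j) = f a $$ (i,j) + finsum V f F $$ (i,j)"
    using c assms(3,4) by (intro index_add_mat(1)) (auto simp: carrier_matD[OF c])
  ultimately show ?case using insert by simp
qed

lemma lincomb_mat_index: assumes "finite A" "A \<subseteq> carrier_mat nr nc" "i < nr" "j < nc"
  shows "lincomb a A $$ (i,j) = (\<Sum>x\<in>A. a x * x $$ (i,j))"
proof -
  have "lincomb a A $$ (i,j) = (\<Sum>x\<in>A. (a x \<cdot>\<^sub>m x) $$ (i,j))"
    unfolding lincomb_def using assms by (intro finsum_mat_index) auto
  also have "\<dots> = (\<Sum>x\<in>A. a x * x $$ (i,j))" using assms by (intro sum.cong) auto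
  finally show ?thesis .
qed

end


lemma mcomb_dims[simp]: "dim_row (mcomb nr nc c g I) = nr" "dim_col (mcomb nr nc c g I) = nc"
  by (simp_all add: mcomb_def)

context matrix_vs begin

lemma span_fam: assumes I: "finite I" and g: "g ` I \<subseteq> carrier_mat nr nc"
  shows "Y \<in> span (g ` I) \<longleftrightarrow> (\<exists>c. Y = mcomb nr nc c g I)"
proof
  assume Y: "Y \<in> span (g ` I)"
  have fin: "finite (g ` I)" using I by simp
  obtain a where a: "lincomb a (g ` I) = Y" using finite_in_span[OF fin g Y] by auto
  have Yc: "Y \<in> carrier_mat nr nc" using a g by auto
  define r where "r = inv_into I g"
  define J where "J = r ` (g ` I)"
  have rg: "\<And>x. x \<in> g ` I \<Longrightarrow> g (r x) = x" unfolding r_def by (rule f_inv_into_f)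
  have JI: "J \<subseteq> I" unfolding J_def r_def by (auto intro: inv_into_into)
  have ginj: "inj_on g J" unfolding J_def by (rule inj_onI) (auto simp: rg)
  have gJ: "g ` J = g ` I"
  proof
    show "g ` J \<subseteq> g ` I" using JI by auto
    show "g ` I \<subseteq> g ` J"
    proof
      fix x assume x: "x \<in> g ` I"
      hence "g (r x) = x" by (rule rg)
      moreover have "r x \<in> J" using x unfolding J_def by auto
      ultimately show "x \<in> g ` J" by (metis imageI)
    qed
  qed
  define c where "c i = (if i \<in> J then a (g i) else 0)" for i
  show "\<exists>c. Y = mcomb nr nc c g I"
  proof (intro exI eq_matI)
    fix u v assume uv: "u < dim_row (mcomb nr nc c g I)" "v < dim_col (mcomb nr nc c g I)"
    hence u: "u < nr" and v: "v < nc" by auto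
    have "Y $$ (u,v) = lincomb a (g ` I) $$ (u,v)" using a by simp
    also have "\<dots> = (\<Sum>x\<in>g ` I. a x * x $$ (u,v))" by (rule lincomb_mat_index[OF fin g u v])
    also have "\<dots> = (\<Sum>x\<in>g ` J. a x * x $$ (u,v))" by (simp add: gJ)
    also have "\<dots> = (\<Sum>i\<in>J. a (g i) * g i $$ (u,v))" by (rule sum.reindex[OF ginj, unfolded comp_def])
    also have "\<dots> = (\<Sum>i\<in>I. c i * g i $$ (u,v))"
      by (rule sum.mono_neutral_cong_right[symmetric]) (use I JI in \<open>auto simp: c_def\<close>)
    also have "\<dots> = mcomb nr nc c g I $$ (u,v)" using u v by (simp add: mcomb_index)
    finally show "Y $$ (u,v) = mcomb nr nc c g I $$ (u,v)" .
  qed (use Yc in auto)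
next
  assume "\<exists>c. Y = mcomb nr nc c g I"
  then obtain c where Y: "Y = mcomb nr nc c g I" by auto
  have fin: "finite (g ` I)" using I by simp
  define a where "a x = (\<Sum>i\<in>{i\<in>I. g i = x}. c i)" for x
  have "lincomb a (g ` I) = Y"
  proof (rule eq_matI)
    fix u v assume "u < dim_row Y" "v < dim_col Y"
    hence u: "u < nr" and v: "v < nc" using Y by auto
    have "lincomb a (g ` I) $$ (u,v) = (\<Sum>x\<in>g ` I. a x * x $$ (u,v))"
      by (rule lincomb_mat_index[OF fin g u v])
    also have "\<dots> = (\<Sum>x\<in>g ` I. \<Sum>i\<in>{i\<in>I. g i = x}. c i * g i $$ (u,v))"
      by (rule sum.cong[OF refl]) (auto simp: a_def sum_distrib_right)
    also have "\<dots> = (\<Sum>i\<in>I. c i * g i $$ (u,v))"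
      by (rule sum.image_gen[symmetric, OF I])
    also have "\<dots> = Y $$ (u,v)" using Y u v by (simp add: mcomb_index)
    finally show "lincomb a (g ` I) $$ (u,v) = Y $$ (u,v)" .
  next
    have lcc: "lincomb a (g ` I) \<in> carrier_mat nr nc" using lincomb_closed g by auto
    show "dim_row (lincomb a (g ` I)) = dim_row Y" "dim_col (lincomb a (g ` I)) = dim_col Y"
      using carrier_matD[OF lcc] Y by auto
  qed
  thus "Y \<in> span (g ` I)" unfolding span_def using fin by blast
qed

lemma indep_fam: assumes I: "finite I" and g: "g ` I \<subseteq> carrier_mat nr nc"
  shows "mindep nr nc g I \<longleftrightarrow> inj_on g I \<and> lin_indpt (g ` I)"
proof
  assume md: "mindep nr nc g I"
  have fin: "finite (g ` I)" using I by simp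
  have inj: "inj_on g I"
  proof (rule inj_onI, rule ccontr)
    fix i j assume ij: "i \<in> I" "j \<in> I" "g i = g j" "i \<noteq> j"
    define c where "c k = (if k = i then 1 else if k = j then -1 else (0::'a))" for k
    have "mcomb nr nc c g I = 0\<^sub>m nr nc"
    proof (rule eq_matI)
      fix u v assume "u < dim_row (0\<^sub>m nr nc :: 'a mat)" "v < dim_col (0\<^sub>m nr nc :: 'a mat)"
      hence u: "u < nr" and v: "v < nc" by auto
      have "(\<Sum>k\<in>I. c k * g k $$ (u,v)) = (\<Sum>k\<in>I. (if k = i then g k $$ (u,v) else 0) + (if k = j then - g k $$ (u,v) else 0))"
        by (rule sum.cong[OF refl]) (use ij in \<open>auto simp: c_def\<close>)
      also have "\<dots> = g i $$ (u,v) - g j $$ (u,v)"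
        using ij I by (simp add: sum.distrib sum.delta)
      also have "\<dots> = 0" using ij by simp
      finally show "mcomb nr nc c g I $$ (u,v) = 0\<^sub>m nr nc $$ (u,v)" using u v by (simp add: mcomb_index)
    qed auto
    hence "c i = 0" using md ij unfolding mindep_def by blast
    thus False by (simp add: c_def)
  qed
  have li: "lin_indpt (g ` I)"
  proof
    assume ld: "lin_dep (g ` I)"
    obtain a v where av: "a \<in> g ` I \<rightarrow> UNIV" "lincomb a (g ` I) = 0\<^sub>m nr nc" "v \<in> g ` I" "a v \<noteq> 0"
      using finite_lin_dep[OF fin ld g] by auto
    define c where "c i = a (g i)" for i
    have "mcomb nr nc c g I = 0\<^sub>m nr nc"
    proof (rule eq_matI)
      fix u v assume "u < dim_row (0\<^sub>m nr nc :: 'a mat)" "v < dim_col (0\<^sub>m nr nc :: 'a mat)"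
      hence u: "u < nr" and v: "v < nc" by auto
      have "(\<Sum>i\<in>I. c i * g i $$ (u,v)) = (\<Sum>x\<in>g ` I. a x * x $$ (u,v))"
        using sum.reindex[OF inj, of "\<lambda>x. a x * x $$ (u,v)"] by (simp add: c_def)
      also have "\<dots> = lincomb a (g ` I) $$ (u,v)" by (rule lincomb_mat_index[OF fin g u v, symmetric])
      also have "\<dots> = 0" using av u v by simp
      finally show "mcomb nr nc c g I $$ (u,v) = 0\<^sub>m nr nc $$ (u,v)" using u v by (simp add: mcomb_index)
    qed auto
    hence "\<forall>i\<in>I. c i = 0" using md unfolding mindep_def by blast
    thus False using av(3,4) by (auto simp: c_def)
  qed
  show "inj_on g I \<and> lin_indpt (g ` I)" using inj li by auto
next
  assume h: "inj_on g I \<and> lin_indpt (g ` I)"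
  have fin: "finite (g ` I)" using I by simp
  show "mindep nr nc g I" unfolding mindep_def
  proof (intro allI impI ballI)
    fix c i assume c0: "mcomb nr nc c g I = 0\<^sub>m nr nc" and i: "i \<in> I"
    define a where "a x = c (inv_into I g x)" for x
    have lc: "lincomb a (g ` I) = 0\<^sub>m nr nc"
    proof (rule eq_matI)
      fix u v assume "u < dim_row (0\<^sub>m nr nc :: 'a mat)" "v < dim_col (0\<^sub>m nr nc :: 'a mat)"
      hence u: "u < nr" and v: "v < nc" by auto
      have "lincomb a (g ` I) $$ (u,v) = (\<Sum>x\<in>g ` I. a x * x $$ (u,v))" by (rule lincomb_mat_index[OF fin g u v])
      also have "\<dots> = (\<Sum>i\<in>I. c i * g i $$ (u,v))"
        using sum.reindex[of g I "\<lambda>x. a x * x $$ (u,v)"] h by (simp add: a_def)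
      also have "\<dots> = 0" using c0 u v by (metis index_zero_mat(1) mcomb_index)
      finally show "lincomb a (g ` I) $$ (u,v) = 0\<^sub>m nr nc $$ (u,v)" using u v by simp
    next
      show "dim_row (lincomb a (g ` I)) = dim_row (0\<^sub>m nr nc :: 'a mat)"
           "dim_col (lincomb a (g ` I)) = dim_col (0\<^sub>m nr nc :: 'a mat)"
      proof -
        have lcc: "lincomb a (g ` I) \<in> carrier_mat nr nc" using lincomb_closed g by auto
        show "dim_row (lincomb a (g ` I)) = dim_row (0\<^sub>m nr nc :: 'a mat)"
           "dim_col (lincomb a (g ` I)) = dim_col (0\<^sub>m nr nc :: 'a mat)" using carrier_matD[OF lcc] by auto
      qed
    qed
    show "c i = 0"
    proof (rule ccontr)
      assume "c i \<noteq> 0"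
      hence "a (g i) \<noteq> 0" using h i by (simp add: a_def)
      hence "lin_dep (g ` I)" using lin_dep_crit[of "g ` I" "g ` I" a "g i"] fin lc i by auto
      thus False using h by auto
    qed
  qed
qed

end


context matrix_vs begin

lemma basis_subset': assumes S: "finite S" "S \<subseteq> carrier_mat nr nc"
  obtains U where "U \<subseteq> S" "lin_indpt U" "span U = span S" "card U = vectorspace.dim class_ring (span_vs S)" "finite U"
    "U \<subseteq> carrier_mat nr nc"
proof -
  from basis_subset[OF S] obtain U where U: "U \<subseteq> S \<and> lin_indpt U \<and> span U = span S \<and> card U = vectorspace.dim class_ring (span_vs S)"
    by (erule exE)
  have U1: "U \<subseteq> S" using U by (rule conjunct1)
  have U2: "lin_indpt U" using U by (rule conjunct2[THEN conjunct1])
  have U3: "span U = span S" using U by (rule conjunct2[THEN conjunct2, THEN conjunct1])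
  have U4: "card U = vectorspace.dim class_ring (span_vs S)" using U by (rule conjunct2[THEN conjunct2, THEN conjunct2])
  have fU: "finite U" using U1 S(1) by (rule finite_subset)
  have Uc: "U \<subseteq> carrier_mat nr nc" using U1 S(2) by (rule subset_trans)
  show ?thesis by (rule that[OF U1 U2 U3 U4 fU Uc])
qed

lemma DL1: assumes S: "finite S" "S \<subseteq> carrier_mat nr nc" and I: "finite I" and g: "g ` I \<subseteq> carrier_mat nr nc"
  and sub: "S \<subseteq> span (g ` I)"
  shows "vectorspace.dim class_ring (span_vs S) \<le> card I"
proof -
  obtain U where U1: "U \<subseteq> S" and U2: "lin_indpt U" and U4: "card U = vectorspace.dim class_ring (span_vs S)"
    and fU: "finite U" by (rule basis_subset'[OF S])
  have "U \<subseteq> span (g ` I)" using U1 sub by (rule subset_trans)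
  hence "card U \<le> card (g ` I)" using li_le_span_card[OF fU _ g U2] I by simp
  also have "\<dots> \<le> card I" using I by (rule card_image_le)
  finally show ?thesis using U4 by simp
qed

lemma DL2: assumes S: "finite S" "S \<subseteq> carrier_mat nr nc"
  shows "\<exists>g. (\<forall>k<vectorspace.dim class_ring (span_vs S). g k \<in> carrier_mat nr nc) \<and>
     span (g ` {..<vectorspace.dim class_ring (span_vs S)}) = span S \<and> mindep nr nc g {..<vectorspace.dim class_ring (span_vs S)}"
proof -
  obtain U where U2: "lin_indpt U" and U3: "span U = span S" and U4: "card U = vectorspace.dim class_ring (span_vs S)"
    and fU: "finite U" and Uc: "U \<subseteq> carrier_mat nr nc" by (rule basis_subset'[OF S])
  obtain h where h: "bij_betw h {0..<card U} U" using ex_bij_betw_nat_finite[OF fU] by blast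
  have hU: "h ` {..<card U} = U" using h by (simp add: bij_betw_def atLeast0LessThan)
  have hi: "inj_on h {..<card U}" using h by (simp add: bij_betw_def atLeast0LessThan)
  have "mindep nr nc h {..<card U}" using indep_fam[of "{..<card U}" h] hU hi U2 Uc by simp
  moreover have "\<forall>k<card U. h k \<in> carrier_mat nr nc" using hU Uc by auto
  moreover have "span (h ` {..<card U}) = span S" using hU U3 by simp
  ultimately show ?thesis using U4 by metis
qed

lemma DL3: assumes S: "finite S" "S \<subseteq> carrier_mat nr nc"
  and g: "\<forall>k<vectorspace.dim class_ring (span_vs S). g k \<in> carrier_mat nr nc"
  and sub: "S \<subseteq> span (g ` {..<vectorspace.dim class_ring (span_vs S)})"
  shows "span (g ` {..<vectorspace.dim class_ring (span_vs S)}) = span S \<and> mindep nr nc g {..<vectorspace.dim class_ring (span_vs S)}"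
proof -
  define D where "D = vectorspace.dim class_ring (span_vs S)"
  define G where "G = g ` {..<D}"
  have Gc: "G \<subseteq> carrier_mat nr nc" using g unfolding G_def D_def by auto
  have fG: "finite G" unfolding G_def by simp
  obtain U where U1: "U \<subseteq> S" and U2: "lin_indpt U" and U3: "span U = span S" and U4: "card U = D"
    and fU: "finite U" unfolding D_def by (rule basis_subset'[OF S])
  obtain U' where U'1: "U' \<subseteq> G" and U'2: "lin_indpt U'" and U'3: "span U' = span G"
    and fU': "finite U'" and U'c: "U' \<subseteq> carrier_mat nr nc" by (rule basis_subset'[OF fG Gc])
  have UG: "U \<subseteq> span G" using U1 sub unfolding G_def D_def by (rule subset_trans)
  hence "U \<subseteq> span U'" using U'3 by simp
  hence c1: "card U \<le> card U'" using li_le_span_card[OF fU fU' U'c U2] by simp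
  have c2: "card U' \<le> card G" using U'1 by (rule card_mono[OF fG])
  have c3: "card G \<le> D" unfolding G_def using card_image_le[of "{..<D}" g] by simp
  have cG: "card G = D" using c1 c2 c3 U4 by linarith
  have "card U' = card G" using c1 c2 c3 U4 by linarith
  hence "U' = G" using card_subset_eq[OF fG U'1] by simp
  hence liG: "lin_indpt G" using U'2 by simp
  have inj: "inj_on g {..<D}" using cG unfolding G_def by (simp add: eq_card_imp_inj_on)
  have md: "mindep nr nc g {..<D}" using indep_fam[of "{..<D}" g] inj liG Gc unfolding G_def by simp
  have "card G \<le> card U" using cG U4 by simp
  hence "span U = span G" using span_eq_card[OF fU fG Gc U2 UG] by simp
  hence "span G = span S" using U3 by simp
  thus ?thesis using md unfolding G_def D_def by simp
qed

lemma DL4: assumes S: "finite S" "S \<subseteq> carrier_mat nr nc"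
  and g: "\<forall>k<k0. g k \<in> carrier_mat nr nc" and sub: "g ` {..<k0} \<subseteq> span S"
  and md: "mindep nr nc g {..<k0}"
  shows "k0 \<le> vectorspace.dim class_ring (span_vs S)"
proof -
  obtain U where U3: "span U = span S" and U4: "card U = vectorspace.dim class_ring (span_vs S)"
    and fU: "finite U" and Uc: "U \<subseteq> carrier_mat nr nc" by (rule basis_subset'[OF S])
  have gc: "g ` {..<k0} \<subseteq> carrier_mat nr nc" using g by auto
  have il: "inj_on g {..<k0} \<and> lin_indpt (g ` {..<k0})" using indep_fam[of "{..<k0}" g] md gc by simp
  have "g ` {..<k0} \<subseteq> span U" using sub U3 by simp
  hence "card (g ` {..<k0}) \<le> card U" using li_le_span_card[of "g ` {..<k0}" U] fU Uc il by simp
  moreover have "card (g ` {..<k0}) = k0" using il by (simp add: card_image)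
  ultimately show ?thesis using U4 by simp
qed

end


lemma blocks_fam: "blocks n q \<L> = (\<lambda>s. mat_block n q \<L> (s mod n) (s div n)) ` {..<q*n}"
proof
  show "blocks n q \<L> \<subseteq> (\<lambda>s. mat_block n q \<L> (s mod n) (s div n)) ` {..<q*n}"
  proof
    fix X assume "X \<in> blocks n q \<L>"
    then obtain i j where ij: "X = mat_block n q \<L> i j" "i < n" "j < q" by (auto simp: blocks_def)
    have "j*n+i < n*q" using ij by (simp add: idx_lt)
    moreover have "(j*n+i) mod n = i" "(j*n+i) div n = j" using ij by auto
    ultimately show "X \<in> (\<lambda>s. mat_block n q \<L> (s mod n) (s div n)) ` {..<q*n}"
      using ij by (metis (no_types, lifting) image_eqI lessThan_iff mult.commute)
  qed
  show "(\<lambda>s. mat_block n q \<L> (s mod n) (s div n)) ` {..<q*n} \<subseteq> blocks n q \<L>"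
  proof
    fix X assume "X \<in> (\<lambda>s. mat_block n q \<L> (s mod n) (s div n)) ` {..<q*n}"
    then obtain s where s: "s < q*n" "X = mat_block n q \<L> (s mod n) (s div n)" by auto
    have "s mod n < n" "s div n < q" using mod_div_lt[of s n q] s by (auto simp: mult.commute)
    thus "X \<in> blocks n q \<L>" using s by (auto simp: blocks_def)
  qed
qed

lemma blocks_finite[simp]: "finite (blocks n q \<L>)" by (simp add: blocks_fam)

lemma blocks_carrier[simp]: "blocks n q \<L> \<subseteq> carrier_mat n q" by (auto simp: blocks_def)

lemma vec_cs_lincomb:
  assumes X: "finite X" "X \<subseteq> carrier_mat n q"
  shows "module.lincomb (module_vec TYPE('a::field) (n*q)) a (vec_cs ` X) =
    vec_cs (module.lincomb (module_mat TYPE('a) n q) (\<lambda>Y. a (vec_cs Y)) X)"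
proof -
  interpret M: matrix_vs n q "TYPE('a)" .
  interpret W: vec_space "TYPE('a)" "n*q" .
  have inj: "inj_on vec_cs X" using X vec_cs_inj by (metis inj_onI subsetD)
  have Xv: "vec_cs ` X \<subseteq> carrier_vec (n*q)" using X by auto
  have lcM: "M.lincomb (\<lambda>Y. a (vec_cs Y)) X \<in> carrier_mat n q" using X by (intro M.lincomb_closed) auto
  show ?thesis
  proof (rule eq_vecI)
    fix t assume "t < dim_vec (vec_cs (M.lincomb (\<lambda>Y. a (vec_cs Y)) X))"
    hence t: "t < n*q" using lcM by (simp add: vec_cs_def)
    have tm: "t mod n < n" "t div n < q" using mod_div_lt[OF t] by auto
    have "W.lincomb a (vec_cs ` X) $ t = (\<Sum>w\<in>vec_cs ` X. a w * w $ t)" by (rule W.lincomb_index[OF t Xv])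
    also have "\<dots> = (\<Sum>Y\<in>X. a (vec_cs Y) * vec_cs Y $ t)" by (simp add: sum.reindex[OF inj])
    also have "\<dots> = (\<Sum>Y\<in>X. a (vec_cs Y) * Y $$ (t mod n, t div n))"
      by (rule sum.cong[OF refl]) (use X t in \<open>auto simp: vec_cs_index\<close>)
    also have "\<dots> = M.lincomb (\<lambda>Y. a (vec_cs Y)) X $$ (t mod n, t div n)"
      by (rule M.lincomb_mat_index[OF X tm, symmetric])
    also have "\<dots> = vec_cs (M.lincomb (\<lambda>Y. a (vec_cs Y)) X) $ t" using lcM t by (simp add: vec_cs_index)
    finally show "W.lincomb a (vec_cs ` X) $ t = vec_cs (M.lincomb (\<lambda>Y. a (vec_cs Y)) X) $ t" .
  next
    have "W.lincomb a (vec_cs ` X) \<in> carrier_vec (n*q)" using Xv by (intro W.lincomb_closed) auto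
    thus "dim_vec (W.lincomb a (vec_cs ` X)) = dim_vec (vec_cs (M.lincomb (\<lambda>Y. a (vec_cs Y)) X))"
      using lcM by (simp add: vec_cs_def)
  qed
qed


lemma vec_cs_zero: "vec_cs (0\<^sub>m n q :: 'a::field mat) = 0\<^sub>v (n*q)"
  by (rule eq_vecI) (auto simp: vec_cs_def mod_div_lt)

lemma rank_bridge: assumes lin: "lin_map n q \<L>"
  shows "vec_space.rank (q*n) (choi n q \<L>) =
    vectorspace.dim class_ring ((module_mat TYPE('a::field) n q)\<lparr>carrier := mspan n q (blocks n q \<L>)\<rparr>)"
proof -
  interpret M: matrix_vs n q "TYPE('a)" .
  interpret W: vec_space "TYPE('a)" "n*q" .
  let ?B = "blocks n q \<L>"
  obtain U where U1: "U \<subseteq> ?B" and U2: "M.lin_indpt U" and U3: "M.span U = M.span ?B"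
    and U4: "card U = vectorspace.dim class_ring (M.span_vs ?B)" and fU: "finite U" and Uc: "U \<subseteq> carrier_mat n q"
    by (rule M.basis_subset'[OF blocks_finite blocks_carrier])
  have inj: "inj_on vec_cs U" using Uc vec_cs_inj by (metis inj_onI subsetD)
  have Uv: "vec_cs ` U \<subseteq> carrier_vec (n*q)" using Uc by auto
  have fUv: "finite (vec_cs ` U)" using fU by simp
  have li: "W.lin_indpt (vec_cs ` U)"
  proof
    assume ld: "W.lin_dep (vec_cs ` U)"
    obtain a v where av: "W.lincomb a (vec_cs ` U) = 0\<^sub>v (n*q)" "v \<in> vec_cs ` U" "a v \<noteq> 0"
      using W.finite_lin_dep[OF fUv ld Uv] by auto
    have lcM: "M.lincomb (\<lambda>Y. a (vec_cs Y)) U \<in> carrier_mat n q" using Uc by (intro M.lincomb_closed) auto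
    have "vec_cs (M.lincomb (\<lambda>Y. a (vec_cs Y)) U) = vec_cs (0\<^sub>m n q :: 'a mat)"
      using vec_cs_lincomb[OF fU Uc, of a] av(1) by (simp add: vec_cs_zero)
    hence z: "M.lincomb (\<lambda>Y. a (vec_cs Y)) U = 0\<^sub>m n q" using vec_cs_inj[OF lcM zero_carrier_mat] by simp
    obtain Y0 where Y0: "Y0 \<in> U" "v = vec_cs Y0" using av(2) by auto
    have "M.lin_dep U" using M.lin_dep_crit[of U U "\<lambda>Y. a (vec_cs Y)" Y0] fU Y0 av(3) z by auto
    thus False using U2 by simp
  qed
  have sp: "vec_cs Y \<in> W.span (vec_cs ` U)" if Y: "Y \<in> M.span U" for Y
  proof -
    obtain a where a: "M.lincomb a U = Y" using M.finite_in_span[OF fU Uc Y] by auto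
    define b where "b w = a (inv_into U vec_cs w)" for w
    have "M.lincomb (\<lambda>Y. b (vec_cs Y)) U = M.lincomb a U"
      by (rule M.lincomb_cong) (use Uc inj in \<open>auto simp: b_def\<close>)
    hence "vec_cs Y = W.lincomb b (vec_cs ` U)" using vec_cs_lincomb[OF fU Uc, of b] a by simp
    thus ?thesis using fUv by (intro W.in_spanI) auto
  qed
  have colsS: "set (cols (choi n q \<L>)) = vec_cs ` ?B"
  proof -
    have "set (cols (choi n q \<L>)) = col (choi n q \<L>) ` {..<q*n}"
      by (simp add: cols_def choi_def atLeast0LessThan)
    also have "\<dots> = (\<lambda>s. vec_cs (mat_block n q \<L> (s mod n) (s div n))) ` {..<q*n}"
      using choi_col[OF lin] by (intro image_cong) auto
    also have "\<dots> = vec_cs ` ?B" by (simp add: blocks_fam image_image)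
    finally show ?thesis .
  qed
  have max: "maximal (vec_cs ` U) (\<lambda>T. T \<subseteq> set (cols (choi n q \<L>)) \<and> W.lin_indpt T)"
    unfolding maximal_def
  proof (intro conjI allI impI)
    show "vec_cs ` U \<subseteq> set (cols (choi n q \<L>))" using U1 colsS by auto
    show "W.lin_indpt (vec_cs ` U)" by (rule li)
    fix T assume T: "vec_cs ` U \<subseteq> T \<and> T \<subseteq> set (cols (choi n q \<L>)) \<and> W.lin_indpt T"
    show "T = vec_cs ` U"
    proof (rule ccontr)
      assume "T \<noteq> vec_cs ` U"
      then obtain t where t: "t \<in> T" "t \<notin> vec_cs ` U" using T by blast
      then obtain Y where Y: "Y \<in> ?B" "t = vec_cs Y" using T colsS by blast
      have "Y \<in> M.span U" using Y(1) U3 M.in_own_span[OF blocks_carrier] by blast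
      hence tsp: "t \<in> W.span (vec_cs ` U)" using sp Y by simp
      have "Y \<in> carrier_mat n q" using Y(1) blocks_carrier by blast
      hence tc: "t \<in> carrier_vec (n*q)" using Y(2) by simp
      have "W.lin_dep (vec_cs ` U \<union> {t})" using W.lin_dep_iff_in_span[OF Uv li tc t(2)] tsp by simp
      moreover have "vec_cs ` U \<union> {t} \<subseteq> T" using T t by auto
      ultimately have "W.lin_dep T" by (rule W.supset_ld_is_ld)
      thus False using T by simp
    qed
  qed
  have cc: "choi n q \<L> \<in> carrier_mat (n*q) (q*n)" by (simp add: choi_def mult.commute)
  have "W.rank (choi n q \<L>) = card (vec_cs ` U)" by (rule W.rank_card_indpt[OF cc max])
  also have "\<dots> = card U" using inj by (rule card_image)
  finally have "W.rank (choi n q \<L>) = vectorspace.dim class_ring (M.span_vs ?B)" using U4 by simp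
  thus ?thesis by (simp add: mult.commute mspan_def)
qed


definition mdim :: "nat \<Rightarrow> nat \<Rightarrow> 'a::field mat set \<Rightarrow> nat" where
  "mdim n q S = vectorspace.dim class_ring ((module_mat TYPE('a) n q)\<lparr>carrier := mspan n q S\<rparr>)"

lemma rank_mdim: "lin_map n q \<L> \<Longrightarrow> vec_space.rank (q*n) (choi n q \<L>) = mdim n q (blocks n q \<L>)"
  unfolding mdim_def by (rule rank_bridge)

lemma DL1': assumes "finite S" "S \<subseteq> carrier_mat n q" "finite I" "g ` I \<subseteq> carrier_mat n q" "S \<subseteq> mspan n q (g ` I)"
  shows "mdim n q S \<le> card I"
proof -
  interpret M: matrix_vs n q "TYPE('a::field)" .
  show ?thesis using M.DL1[OF assms[unfolded mspan_def]] unfolding mdim_def mspan_def .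
qed

lemma DL2': assumes "finite S" "S \<subseteq> carrier_mat n q"
  shows "\<exists>g. (\<forall>k<mdim n q S. g k \<in> carrier_mat n q) \<and> mspan n q (g ` {..<mdim n q S}) = mspan n q (S::'a::field mat set)"
proof -
  interpret M: matrix_vs n q "TYPE('a::field)" .
  show ?thesis using M.DL2[OF assms] unfolding mdim_def mspan_def by blast
qed

lemma DL3': assumes "finite S" "S \<subseteq> carrier_mat n q" "\<forall>k<mdim n q S. g k \<in> carrier_mat n q"
  "S \<subseteq> mspan n q (g ` {..<mdim n q S})"
  shows "mspan n q (g ` {..<mdim n q S}) = mspan n q (S::'a::field mat set) \<and> mindep n q g {..<mdim n q S}"
proof -
  interpret M: matrix_vs n q "TYPE('a::field)" .
  show ?thesis using M.DL3[OF assms[unfolded mdim_def mspan_def]] unfolding mdim_def mspan_def .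
qed

lemma DL4': assumes "finite S" "S \<subseteq> carrier_mat n q" "\<forall>k<k0. g k \<in> carrier_mat n q"
  "g ` {..<k0} \<subseteq> mspan n q (S::'a::field mat set)" "mindep n q g {..<k0}"
  shows "k0 \<le> mdim n q S"
proof -
  interpret M: matrix_vs n q "TYPE('a::field)" .
  show ?thesis using M.DL4[OF assms[unfolded mspan_def]] unfolding mdim_def mspan_def .
qed

lemma mspan_carrier: fixes X :: "'a::field mat set" shows "X \<subseteq> carrier_mat n q \<Longrightarrow> mspan n q X \<subseteq> carrier_mat n q"
proof -
  interpret M: matrix_vs n q "TYPE('a::field)" .
  show "X \<subseteq> carrier_mat n q \<Longrightarrow> mspan n q X \<subseteq> carrier_mat n q" unfolding mspan_def by (rule M.span_is_subset2)
qed

lemma mspan_mono: assumes "X \<subseteq> carrier_mat n q" "Y \<subseteq> carrier_mat n q" "X \<subseteq> mspan n q (Y::'a::field mat set)"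
  shows "mspan n q X \<subseteq> mspan n q Y"
proof -
  interpret M: matrix_vs n q "TYPE('a::field)" .
  show ?thesis using assms unfolding mspan_def by (intro M.span_is_subset M.span_is_submodule) auto
qed

lemma mspan_own: assumes "X \<subseteq> carrier_mat n q" shows "X \<subseteq> mspan n q (X::'a::field mat set)"
proof -
  interpret M: matrix_vs n q "TYPE('a::field)" .
  show ?thesis using assms unfolding mspan_def by (rule M.in_own_span)
qed

lemma mspan_fam_iff: fixes g :: "nat \<Rightarrow> 'a::field mat" and I :: "nat set" assumes I: "finite I" and g: "g ` I \<subseteq> carrier_mat n q"
  shows "Y \<in> mspan n q (g ` I) \<longleftrightarrow> Y \<in> carrier_mat n q \<and> (\<exists>c. \<forall>a<n. \<forall>b<q. Y $$ (a,b) = (\<Sum>i\<in>I. c i * g i $$ (a,b)))"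
proof -
  interpret M: matrix_vs n q "TYPE('a::field)" .
  have "Y \<in> mspan n q (g ` I) \<longleftrightarrow> (\<exists>c. Y = mcomb n q c g I)" unfolding mspan_def by (rule M.span_fam[OF I g])
  also have "\<dots> \<longleftrightarrow> Y \<in> carrier_mat n q \<and> (\<exists>c. \<forall>a<n. \<forall>b<q. Y $$ (a,b) = (\<Sum>i\<in>I. c i * g i $$ (a,b)))"
  proof
    assume "\<exists>c. Y = mcomb n q c g I"
    then obtain c where c: "Y = mcomb n q c g I" by blast
    thus "Y \<in> carrier_mat n q \<and> (\<exists>c. \<forall>a<n. \<forall>b<q. Y $$ (a,b) = (\<Sum>i\<in>I. c i * g i $$ (a,b)))"
      by (auto simp: mcomb_index)
  next
    assume h: "Y \<in> carrier_mat n q \<and> (\<exists>c. \<forall>a<n. \<forall>b<q. Y $$ (a,b) = (\<Sum>i\<in>I. c i * g i $$ (a,b)))"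
    then obtain c where c: "\<forall>a<n. \<forall>b<q. Y $$ (a,b) = (\<Sum>i\<in>I. c i * g i $$ (a,b))" by blast
    have "Y = mcomb n q c g I" by (rule eq_matI) (use h c in \<open>auto simp: mcomb_index\<close>)
    thus "\<exists>c. Y = mcomb n q c g I" by blast
  qed
  finally show ?thesis .
qed

lemma blk_sum: assumes lin: "lin_map n q \<L>" and a: "a < n" and b: "b < q"
  shows "(\<Sum>s<q*n. c s * mat_block n q \<L> (s mod n) (s div n) $$ (a,b)) =
    (\<Sum>i<n. \<Sum>j<q. c (j*n+i) * Tt \<L> q i j a b)"
proof -
  have "(\<Sum>s<q*n. c s * mat_block n q \<L> (s mod n) (s div n) $$ (a,b)) =
     (\<Sum>j<q. \<Sum>i<n. c (j*n+i) * mat_block n q \<L> ((j*n+i) mod n) ((j*n+i) div n) $$ (a,b))"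
    by (rule sum_div_mod)
  also have "\<dots> = (\<Sum>j<q. \<Sum>i<n. c (j*n+i) * Tt \<L> q i j a b)"
    by (intro sum.cong refl) (auto simp: block_entry[OF lin _ _ a b])
  also have "\<dots> = (\<Sum>i<n. \<Sum>j<q. c (j*n+i) * Tt \<L> q i j a b)" by (rule sum.swap)
  finally show ?thesis .
qed

lemma mspan_blocks_iff: assumes lin: "lin_map n q \<L>"
  shows "Y \<in> mspan n q (blocks n q \<L>) \<longleftrightarrow> Y \<in> carrier_mat n q \<and>
    (\<exists>\<beta>. \<forall>a<n. \<forall>b<q. Y $$ (a,b) = (\<Sum>i<n. \<Sum>j<q. \<beta> i j * Tt \<L> q i j a b))"
proof -
  let ?g = "\<lambda>s. mat_block n q \<L> (s mod n) (s div n)"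
  have g: "?g ` {..<q*n} \<subseteq> carrier_mat n q" by auto
  have "Y \<in> mspan n q (blocks n q \<L>) \<longleftrightarrow> Y \<in> carrier_mat n q \<and> (\<exists>c. \<forall>a<n. \<forall>b<q. Y $$ (a,b) = (\<Sum>s<q*n. c s * ?g s $$ (a,b)))"
    unfolding blocks_fam by (rule mspan_fam_iff[OF _ g]) simp
  also have "\<dots> \<longleftrightarrow> Y \<in> carrier_mat n q \<and>
    (\<exists>\<beta>. \<forall>a<n. \<forall>b<q. Y $$ (a,b) = (\<Sum>i<n. \<Sum>j<q. \<beta> i j * Tt \<L> q i j a b))"
  proof (intro conj_cong refl iffI)
    assume "\<exists>c. \<forall>a<n. \<forall>b<q. Y $$ (a,b) = (\<Sum>s<q*n. c s * ?g s $$ (a,b))"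
    then obtain c where c: "\<forall>a<n. \<forall>b<q. Y $$ (a,b) = (\<Sum>s<q*n. c s * ?g s $$ (a,b))" by blast
    show "\<exists>\<beta>. \<forall>a<n. \<forall>b<q. Y $$ (a,b) = (\<Sum>i<n. \<Sum>j<q. \<beta> i j * Tt \<L> q i j a b)"
      by (rule exI[of _ "\<lambda>i j. c (j*n+i)"]) (use c blk_sum[OF lin] in auto)
  next
    assume "\<exists>\<beta>. \<forall>a<n. \<forall>b<q. Y $$ (a,b) = (\<Sum>i<n. \<Sum>j<q. \<beta> i j * Tt \<L> q i j a b)"
    then obtain \<beta> where \<beta>: "\<forall>a<n. \<forall>b<q. Y $$ (a,b) = (\<Sum>i<n. \<Sum>j<q. \<beta> i j * Tt \<L> q i j a b)" by blast
    show "\<exists>c. \<forall>a<n. \<forall>b<q. Y $$ (a,b) = (\<Sum>s<q*n. c s * ?g s $$ (a,b))"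
    proof (rule exI[of _ "\<lambda>s. \<beta> (s mod n) (s div n)"], intro allI impI)
      fix a b assume ab: "a < n" "b < q"
      have "(\<Sum>s<q*n. \<beta> (s mod n) (s div n) * ?g s $$ (a,b)) = (\<Sum>i<n. \<Sum>j<q. \<beta> ((j*n+i) mod n) ((j*n+i) div n) * Tt \<L> q i j a b)"
        by (rule blk_sum[OF lin ab])
      also have "\<dots> = (\<Sum>i<n. \<Sum>j<q. \<beta> i j * Tt \<L> q i j a b)" by (intro sum.cong refl) auto
      finally show "Y $$ (a,b) = (\<Sum>s<q*n. \<beta> (s mod n) (s div n) * ?g s $$ (a,b))" using \<beta> ab by simp
    qed
  qed
  finally show ?thesis .
qed

lemma block_in_mspan: fixes m :: nat and F :: "nat \<Rightarrow> 'a::field mat" assumes lin: "lin_map n q \<L>" and F: "\<forall>k<m. F k \<in> carrier_mat n q"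
  and T: "\<And>i j a b. i<n \<Longrightarrow> j<q \<Longrightarrow> a<n \<Longrightarrow> b<q \<Longrightarrow> Tt \<L> q i j a b = (\<Sum>k<m. w i j k * F k $$ (a,b))"
  shows "blocks n q \<L> \<subseteq> mspan n q (F ` {..<m})"
proof
  fix X assume "X \<in> blocks n q \<L>"
  then obtain i j where ij: "X = mat_block n q \<L> i j" "i < n" "j < q" by (auto simp: blocks_def)
  have Fc: "F ` {..<m} \<subseteq> carrier_mat n q" using F by auto
  have "X \<in> carrier_mat n q \<and> (\<exists>c. \<forall>a<n. \<forall>b<q. X $$ (a,b) = (\<Sum>k\<in>{..<m}. c k * F k $$ (a,b)))"
    by (rule conjI, simp add: ij, rule exI[of _ "w i j"]) (use ij T block_entry[OF lin] in auto)
  thus "X \<in> mspan n q (F ` {..<m})" using mspan_fam_iff[of "{..<m}" F n q] Fc by simp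
qed

lemma MIN: assumes lin: "lin_map n q \<L>" and h: "hill_rep n q \<L> m' A H"
  shows "mdim n q (blocks n q \<L>) \<le> m'"
proof -
  have hh: "(\<forall>k<m'. A k \<in> carrier_mat n q) \<and> H \<in> carrier_mat m' m' \<and>
    (\<forall>i<n. \<forall>j<q. \<forall>a<n. \<forall>b<q. Tt \<L> q i j a b =
       (\<Sum>k<m'. \<Sum>l<m'. H$$(k,l) * (conjugate (A k $$ (i,j)) * A l $$ (a,b))))"
    using h hill_iff[OF lin] by blast
  define G where "G k = mat n q (\<lambda>(a,b). \<Sum>l<m'. H$$(k,l) * A l $$ (a,b))" for k
  have Gc: "\<forall>k<m'. G k \<in> carrier_mat n q" by (simp add: G_def)
  have "blocks n q \<L> \<subseteq> mspan n q (G ` {..<m'})"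
  proof (rule block_in_mspan[OF lin Gc])
    fix i j a b assume ij: "i<n" "j<q" "a<n" "b<q"
    show "Tt \<L> q i j a b = (\<Sum>k<m'. conjugate (A k $$ (i,j)) * G k $$ (a,b))"
      using hh ij by (simp add: G_def sum_distrib_left ac_simps)
  qed
  moreover have "G ` {..<m'} \<subseteq> carrier_mat n q" using Gc by auto
  ultimately show ?thesis using DL1'[of "blocks n q \<L>" n q "{..<m'}" G] by simp
qed


lemma mindep_zero: assumes "mindep n q g I" "\<forall>a<n. \<forall>b<q. (\<Sum>i\<in>I. c i * g i $$ (a,b)) = 0"
  shows "\<forall>i\<in>I. c i = 0"
proof -
  have "mcomb n q c g I = 0\<^sub>m n q" by (rule eq_matI) (use assms(2) in \<open>auto simp: mcomb_index\<close>)
  thus ?thesis using assms(1) unfolding mindep_def by blast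
qed

lemma mindepI: assumes "\<And>c. \<forall>a<n. \<forall>b<q. (\<Sum>i\<in>I. c i * g i $$ (a,b)) = 0 \<Longrightarrow> \<forall>i\<in>I. c i = 0"
  shows "mindep n q g I"
  unfolding mindep_def
proof (intro allI impI)
  fix c assume "mcomb n q c g I = 0\<^sub>m n q"
  hence "\<forall>a<n. \<forall>b<q. (\<Sum>i\<in>I. c i * g i $$ (a,b)) = 0"
    by (metis index_zero_mat(1) mcomb_index)
  thus "\<forall>i\<in>I. c i = 0" by (rule assms)
qed

definition cmat :: "nat \<Rightarrow> nat \<Rightarrow> 'a::conjugatable_field mat \<Rightarrow> 'a mat" where
  "cmat n q X = mat n q (\<lambda>(i,j). conjugate (X $$ (i,j)))"

lemma cmat_carrier[simp]: "cmat n q X \<in> carrier_mat n q" by (simp add: cmat_def)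

lemma cmat_index[simp]: "i < n \<Longrightarrow> j < q \<Longrightarrow> cmat n q X $$ (i,j) = conjugate (X $$ (i,j))"
  by (simp add: cmat_def)

lemma mindep_conj: assumes md: "mindep n q A {..<m}"
  shows "mindep n q (\<lambda>k. cmat n q (A k)) {..<m}"
proof (rule mindepI)
  fix c :: "nat \<Rightarrow> 'a"
  assume h: "\<forall>a<n. \<forall>b<q. (\<Sum>i\<in>{..<m}. c i * cmat n q (A i) $$ (a,b)) = 0"
  have "\<forall>a<n. \<forall>b<q. (\<Sum>i\<in>{..<m}. conjugate (c i) * A i $$ (a,b)) = 0"
  proof (intro allI impI)
    fix a b assume ab: "a < n" "b < q"
    have "(\<Sum>i\<in>{..<m}. conjugate (c i) * A i $$ (a,b)) = conjugate (\<Sum>i\<in>{..<m}. c i * cmat n q (A i) $$ (a,b))"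
      using ab by (simp add: sum_conjugate conjugate_dist_mul)
    thus "(\<Sum>i\<in>{..<m}. conjugate (c i) * A i $$ (a,b)) = 0" using h ab by simp
  qed
  from mindep_zero[OF md this] show "\<forall>i\<in>{..<m}. c i = 0" by simp
qed

lemma Tt_herm2: assumes lin: "lin_map n q \<L>" and st: "star_linear q \<L>" and "i < n" "j < q" "a < n" "b < q"
  shows "Tt \<L> q i j a b = conjugate (Tt \<L> q a b i j)"
  using herm[OF lin st assms(3-6)] by simp


lemma choice2: assumes "\<forall>i<n. \<forall>j<q. \<exists>c. P i j c"
  shows "\<exists>f. \<forall>i<n. \<forall>j<q. P i j (f i j)"
proof -
  have "\<forall>p. \<exists>c. fst p < n \<longrightarrow> snd p < q \<longrightarrow> P (fst p) (snd p) c" using assms by auto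
  then obtain g where g: "\<forall>p. fst p < n \<longrightarrow> snd p < q \<longrightarrow> P (fst p) (snd p) (g p)" by (metis choice)
  show ?thesis by (rule exI[of _ "\<lambda>i j. g (i,j)"]) (use g in auto)
qed

lemma choice1: assumes "\<forall>k<m. \<exists>c. P k c"
  shows "\<exists>f. \<forall>k<m. P k (f k)"
proof -
  have "\<forall>k. \<exists>c. k < m \<longrightarrow> P k c" using assms by auto
  then obtain g where "\<forall>k. k < m \<longrightarrow> P k (g k)" by (metis choice)
  thus ?thesis by blast
qed

lemma DPART: assumes lin: "lin_map n q \<L>" and st: "star_linear q \<L>"
  and mD: "m = mdim n q (blocks n q \<L>)"
  and A: "\<forall>k<m. A k \<in> carrier_mat n q" and sp: "mspan n q (A ` {..<m}) = mspan n q (blocks n q \<L>)"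
  shows "\<exists>H. hill_rep n q \<L> m A H"
proof -
  let ?B = "blocks n q \<L>"
  let ?T = "Tt \<L> q"
  have Ac: "A ` {..<m} \<subseteq> carrier_mat n q" using A by auto
  have Bsub: "?B \<subseteq> mspan n q (A ` {..<m})" using sp mspan_own[OF blocks_carrier] by simp
  have mdA: "mindep n q A {..<m}" using DL3'[of ?B n q A] A Bsub mD by simp
  have "\<forall>i<n. \<forall>j<q. \<exists>c. \<forall>a<n. \<forall>b<q. ?T i j a b = (\<Sum>l\<in>{..<m}. c l * A l $$ (a,b))"
  proof (intro allI impI)
    fix i j assume ij: "i < n" "j < q"
    have "mat_block n q \<L> i j \<in> mspan n q (A ` {..<m})" using Bsub ij by (auto simp: blocks_def)
    then obtain c where c: "\<forall>a<n. \<forall>b<q. mat_block n q \<L> i j $$ (a,b) = (\<Sum>l\<in>{..<m}. c l * A l $$ (a,b))"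
      using mspan_fam_iff[of "{..<m}" A n q] Ac by auto
    show "\<exists>c. \<forall>a<n. \<forall>b<q. ?T i j a b = (\<Sum>l\<in>{..<m}. c l * A l $$ (a,b))"
      by (rule exI[of _ c]) (use c block_entry[OF lin] ij in auto)
  qed
  from choice2[OF this] obtain cc where cc: "\<forall>i<n. \<forall>j<q. \<forall>a<n. \<forall>b<q. ?T i j a b = (\<Sum>l\<in>{..<m}. cc i j l * A l $$ (a,b))"
    by (erule exE)
  define C where "C l = mat n q (\<lambda>(i,j). cc i j l)" for l
  define cA where "cA k = cmat n q (A k)" for k
  define cb where "cb s = mat n q (\<lambda>(i,j). ?T i j (s mod n) (s div n))" for s
  define S' where "S' = cb ` {..<q*n}"
  have S'f: "finite S'" by (simp add: S'_def)
  have S'c: "S' \<subseteq> carrier_mat n q" by (auto simp: S'_def cb_def)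
  have cAc: "cA ` {..<m} \<subseteq> carrier_mat n q" by (auto simp: cA_def)
  have Cc: "C ` {..<m} \<subseteq> carrier_mat n q" by (auto simp: C_def)
  have s_lt: "s mod n < n" "s div n < q" if "s < q*n" for s using mod_div_lt[of s n q] that by (auto simp: mult.commute)
  have S'1: "S' \<subseteq> mspan n q (cA ` {..<m})"
  proof
    fix X assume "X \<in> S'"
    then obtain s where s: "s < q*n" "X = cb s" by (auto simp: S'_def)
    have "\<forall>i<n. \<forall>j<q. X $$ (i,j) = (\<Sum>l\<in>{..<m}. conjugate (cc (s mod n) (s div n) l) * cA l $$ (i,j))"
    proof (intro allI impI)
      fix i j assume ij: "i < n" "j < q"
      have "X $$ (i,j) = conjugate (?T (s mod n) (s div n) i j)"
        using s ij s_lt[OF s(1)] Tt_herm2[OF lin st ij s_lt[OF s(1)]] by (simp add: cb_def)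
      also have "\<dots> = conjugate (\<Sum>l\<in>{..<m}. cc (s mod n) (s div n) l * A l $$ (i,j))"
        using cc s_lt[OF s(1)] ij by simp
      also have "\<dots> = (\<Sum>l\<in>{..<m}. conjugate (cc (s mod n) (s div n) l) * cA l $$ (i,j))"
        using ij by (simp add: sum_conjugate conjugate_dist_mul cA_def)
      finally show "X $$ (i,j) = (\<Sum>l\<in>{..<m}. conjugate (cc (s mod n) (s div n) l) * cA l $$ (i,j))" .
    qed
    moreover have "X \<in> carrier_mat n q" using s by (simp add: cb_def)
    ultimately show "X \<in> mspan n q (cA ` {..<m})" using mspan_fam_iff[of "{..<m}" cA n q] cAc by auto
  qed
  have S'2: "cA ` {..<m} \<subseteq> mspan n q S'"
  proof
    fix X assume "X \<in> cA ` {..<m}"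
    then obtain k where k: "k < m" "X = cA k" by auto
    have "A k \<in> mspan n q ?B" using sp k mspan_own[OF Ac] by auto
    hence "A k \<in> carrier_mat n q \<and> (\<exists>\<beta>. \<forall>a<n. \<forall>b<q. A k $$ (a,b) = (\<Sum>i<n. \<Sum>j<q. \<beta> i j * ?T i j a b))"
      by (simp only: mspan_blocks_iff[OF lin])
    then obtain \<beta> where \<beta>: "\<forall>a<n. \<forall>b<q. A k $$ (a,b) = (\<Sum>i<n. \<Sum>j<q. \<beta> i j * ?T i j a b)"
      by blast
    have cbc: "cb ` {..<q*n} \<subseteq> carrier_mat n q" by (auto simp: cb_def)
    have "\<forall>x<n. \<forall>y<q. X $$ (x,y) = (\<Sum>s\<in>{..<q*n}. conjugate (\<beta> (s mod n) (s div n)) * cb s $$ (x,y))"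
    proof (intro allI impI)
      fix x y assume xy: "x < n" "y < q"
      have "X $$ (x,y) = conjugate (\<Sum>i<n. \<Sum>j<q. \<beta> i j * ?T i j x y)" using k \<beta> xy by (simp add: cA_def)
      also have "\<dots> = (\<Sum>i<n. \<Sum>j<q. conjugate (\<beta> i j) * conjugate (?T i j x y))"
        by (simp add: sum_conjugate conjugate_dist_mul)
      also have "\<dots> = (\<Sum>i<n. \<Sum>j<q. conjugate (\<beta> i j) * ?T x y i j)"
      proof (intro sum.cong refl)
        fix i j assume "i \<in> {..<n}" "j \<in> {..<q}"
        hence "?T x y i j = conjugate (?T i j x y)" using herm[OF lin st _ _ xy] by simp
        thus "conjugate (\<beta> i j) * conjugate (?T i j x y) = conjugate (\<beta> i j) * ?T x y i j" by simp
      qed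
      also have "\<dots> = (\<Sum>j<q. \<Sum>i<n. conjugate (\<beta> i j) * ?T x y i j)" by (rule sum.swap)
      also have "\<dots> = (\<Sum>s<q*n. conjugate (\<beta> (s mod n) (s div n)) * ?T x y (s mod n) (s div n))"
        by (rule sum_div_mod2[symmetric])
      also have "\<dots> = (\<Sum>s\<in>{..<q*n}. conjugate (\<beta> (s mod n) (s div n)) * cb s $$ (x,y))"
        using xy s_lt by (intro sum.cong refl) (simp add: cb_def)
      finally show "X $$ (x,y) = (\<Sum>s\<in>{..<q*n}. conjugate (\<beta> (s mod n) (s div n)) * cb s $$ (x,y))" .
    qed
    moreover have "X \<in> carrier_mat n q" using k by (simp add: cA_def)
    ultimately show "X \<in> mspan n q S'" unfolding S'_def using mspan_fam_iff[of "{..<q*n}" cb n q] cbc by auto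
  qed
  have dS'1: "mdim n q S' \<le> m" using DL1'[OF S'f S'c _ cAc S'1] by simp
  have cAeq: "cA = (\<lambda>k. cmat n q (A k))" by (rule ext) (simp add: cA_def)
  have "mindep n q cA {..<m}" using mindep_conj[OF mdA] cAeq by simp
  hence "m \<le> mdim n q S'" using DL4'[OF S'f S'c _ S'2] cAc by auto
  hence dS': "mdim n q S' = m" using dS'1 by simp
  have S'3: "S' \<subseteq> mspan n q (C ` {..<m})"
  proof
    fix X assume "X \<in> S'"
    then obtain s where s: "s < q*n" "X = cb s" by (auto simp: S'_def)
    have "\<forall>i<n. \<forall>j<q. X $$ (i,j) = (\<Sum>l\<in>{..<m}. A l $$ (s mod n, s div n) * C l $$ (i,j))"
      using s cc s_lt[OF s(1)] by (auto simp: cb_def C_def mult.commute)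
    moreover have "X \<in> carrier_mat n q" using s by (simp add: cb_def)
    ultimately show "X \<in> mspan n q (C ` {..<m})" using mspan_fam_iff[of "{..<m}" C n q] Cc by auto
  qed
  have "mspan n q (C ` {..<m}) = mspan n q S'"
    using DL3'[OF S'f S'c, of C] dS' S'3 Cc by auto
  moreover have "mspan n q S' \<subseteq> mspan n q (cA ` {..<m})" by (rule mspan_mono[OF S'c cAc S'1])
  ultimately have Csub: "C ` {..<m} \<subseteq> mspan n q (cA ` {..<m})" using mspan_own[OF Cc] by blast
  have "\<forall>l<m. \<exists>h. \<forall>i<n. \<forall>j<q. C l $$ (i,j) = (\<Sum>k\<in>{..<m}. h k * cA k $$ (i,j))"
  proof (intro allI impI)
    fix l assume "l < m"
    hence "C l \<in> mspan n q (cA ` {..<m})" using Csub by auto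
    thus "\<exists>h. \<forall>i<n. \<forall>j<q. C l $$ (i,j) = (\<Sum>k\<in>{..<m}. h k * cA k $$ (i,j))"
      using mspan_fam_iff[of "{..<m}" cA n q] cAc by auto
  qed
  from choice1[OF this] obtain hh where hh: "\<forall>l<m. \<forall>i<n. \<forall>j<q. C l $$ (i,j) = (\<Sum>k\<in>{..<m}. hh l k * cA k $$ (i,j))"
    by (erule exE)
  define H where "H = mat m m (\<lambda>(k,l). hh l k)"
  have "hill_rep n q \<L> m A H" unfolding hill_iff[OF lin]
  proof (intro conjI A allI impI)
    show "H \<in> carrier_mat m m" by (simp add: H_def)
    fix i j a b assume ij: "i < n" "j < q" "a < n" "b < q"
    have "?T i j a b = (\<Sum>l<m. cc i j l * A l $$ (a,b))" using cc ij by simp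
    also have "\<dots> = (\<Sum>l<m. (\<Sum>k<m. hh l k * conjugate (A k $$ (i,j))) * A l $$ (a,b))"
    proof (intro sum.cong refl)
      fix l assume "l \<in> {..<m}"
      hence "C l $$ (i,j) = (\<Sum>k\<in>{..<m}. hh l k * cA k $$ (i,j))" using hh ij by simp
      thus "cc i j l * A l $$ (a,b) = (\<Sum>k<m. hh l k * conjugate (A k $$ (i,j))) * A l $$ (a,b)"
        using ij by (simp add: C_def cA_def)
    qed
    also have "\<dots> = (\<Sum>l<m. \<Sum>k<m. H $$ (k,l) * (conjugate (A k $$ (i,j)) * A l $$ (a,b)))"
      by (intro sum.cong refl) (simp add: H_def sum_distrib_right sum_distrib_left ac_simps)
    also have "\<dots> = (\<Sum>k<m. \<Sum>l<m. H $$ (k,l) * (conjugate (A k $$ (i,j)) * A l $$ (a,b)))"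
      by (rule sum.swap)
    finally show "?T i j a b = (\<Sum>k<m. \<Sum>l<m. H $$ (k,l) * (conjugate (A k $$ (i,j)) * A l $$ (a,b)))" .
  qed
  thus ?thesis by blast
qed


lemma sum3_swap: "(\<Sum>i\<in>I. \<Sum>j\<in>J. \<Sum>p\<in>P. f i j p) = (\<Sum>p\<in>P. \<Sum>i\<in>I. \<Sum>j\<in>J. f i j p)"
proof -
  have "(\<Sum>i\<in>I. \<Sum>j\<in>J. \<Sum>p\<in>P. f i j p) = (\<Sum>i\<in>I. \<Sum>p\<in>P. \<Sum>j\<in>J. f i j p)"
    by (rule sum.cong[OF refl], rule sum.swap)
  also have "\<dots> = (\<Sum>p\<in>P. \<Sum>i\<in>I. \<Sum>j\<in>J. f i j p)" by (rule sum.swap)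
  finally show ?thesis .
qed

lemma minimalI: assumes lin: "lin_map n q \<L>" and mD: "m = mdim n q (blocks n q \<L>)"
  and h: "hill_rep n q \<L> m A H"
  shows "minimal_hill_rep n q \<L> m A H"
  unfolding minimal_hill_rep_def using h MIN[OF lin] mD by auto

lemma constrA_carrier[simp]: "constr_A n q \<alpha> k \<in> carrier_mat n q" by (simp add: constr_A_def)
lemma constrA_index[simp]: "i < n \<Longrightarrow> j < q \<Longrightarrow> constr_A n q \<alpha> k $$ (i,j) = conjugate (\<alpha> i j k)"
  by (simp add: constr_A_def)
lemma constrH_carrier[simp]: "constr_H n q m Lf \<beta> \<in> carrier_mat m m" by (simp add: constr_H_def)
lemma constrH_index: "k < m \<Longrightarrow> l < m \<Longrightarrow> constr_H n q m Lf \<beta> $$ (k,l) =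
    (\<Sum>i<n. \<Sum>j<q. \<beta> k i j * conjugate (Lf l $$ (i,j)))"
  by (simp add: constr_H_def constr_B_def)

lemma APART: assumes lin: "lin_map n q \<L>" and st: "star_linear q \<L>"
  and mD: "m = mdim n q (blocks n q \<L>)" and cd: "constr_data n q \<L> m Lf \<alpha> \<beta>"
  shows "minimal_hill_rep n q \<L> m (constr_A n q \<alpha>) (constr_H n q m Lf \<beta>)"
proof -
  let ?T = "Tt \<L> q"
  let ?H = "constr_H n q m Lf \<beta>"
  have blk: "\<And>i j a b. i<n \<Longrightarrow> j<q \<Longrightarrow> a<n \<Longrightarrow> b<q \<Longrightarrow> ?T i j a b = (\<Sum>k<m. \<alpha> i j k * Lf k $$ (a,b))"
    using cd block_entry[OF lin] unfolding constr_data_def by metis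
  have Lb: "\<And>k a b. k<m \<Longrightarrow> a<n \<Longrightarrow> b<q \<Longrightarrow> Lf k $$ (a,b) = (\<Sum>i<n. \<Sum>j<q. \<beta> k i j * ?T i j a b)"
  proof -
    fix k a b assume kab: "k<m" "a<n" "b<q"
    have "Lf k $$ (a,b) = (\<Sum>i<n. \<Sum>j<q. \<beta> k i j * mat_block n q \<L> i j $$ (a,b))"
      using cd kab unfolding constr_data_def by blast
    also have "\<dots> = (\<Sum>i<n. \<Sum>j<q. \<beta> k i j * ?T i j a b)"
      using kab by (intro sum.cong refl) (simp add: block_entry[OF lin])
    finally show "Lf k $$ (a,b) = (\<Sum>i<n. \<Sum>j<q. \<beta> k i j * ?T i j a b)" .
  qed
  have claim: "Lf k $$ (a,b) = (\<Sum>l<m. ?H $$ (k,l) * conjugate (\<alpha> a b l))" if kab: "k<m" "a<n" "b<q" for k a b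
  proof -
    have "(\<Sum>l<m. ?H $$ (k,l) * conjugate (\<alpha> a b l)) =
      (\<Sum>l<m. \<Sum>i<n. \<Sum>j<q. \<beta> k i j * conjugate (Lf l $$ (i,j)) * conjugate (\<alpha> a b l))"
      using kab by (intro sum.cong refl) (simp add: constrH_index sum_distrib_right)
    also have "\<dots> = (\<Sum>i<n. \<Sum>j<q. \<Sum>l<m. \<beta> k i j * conjugate (Lf l $$ (i,j)) * conjugate (\<alpha> a b l))"
      by (rule sum3_swap[symmetric])
    also have "\<dots> = (\<Sum>i<n. \<Sum>j<q. \<beta> k i j * conjugate (\<Sum>l<m. \<alpha> a b l * Lf l $$ (i,j)))"
      by (intro sum.cong refl) (simp add: sum_conjugate conjugate_dist_mul sum_distrib_left ac_simps)
    also have "\<dots> = (\<Sum>i<n. \<Sum>j<q. \<beta> k i j * ?T i j a b)"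
    proof (intro sum.cong refl)
      fix i j assume ij: "i \<in> {..<n}" "j \<in> {..<q}"
      have "conjugate (\<Sum>l<m. \<alpha> a b l * Lf l $$ (i,j)) = conjugate (?T a b i j)" using blk ij kab by simp
      also have "\<dots> = ?T i j a b" using Tt_herm2[OF lin st _ _ kab(2,3), of i j] ij by simp
      finally show "\<beta> k i j * conjugate (\<Sum>l<m. \<alpha> a b l * Lf l $$ (i,j)) = \<beta> k i j * ?T i j a b" by simp
    qed
    also have "\<dots> = Lf k $$ (a,b)" using Lb kab by simp
    finally show ?thesis by simp
  qed
  have "hill_rep n q \<L> m (constr_A n q \<alpha>) ?H" unfolding hill_iff[OF lin]
  proof (intro conjI allI impI)
    fix i j a b assume ij: "i<n" "j<q" "a<n" "b<q"
    have "?T i j a b = (\<Sum>k<m. \<alpha> i j k * Lf k $$ (a,b))" using blk ij by simp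
    also have "\<dots> = (\<Sum>k<m. \<alpha> i j k * (\<Sum>l<m. ?H $$ (k,l) * conjugate (\<alpha> a b l)))"
      using claim ij by (intro sum.cong refl) simp
    also have "\<dots> = (\<Sum>k<m. \<Sum>l<m. ?H $$ (k,l) * (conjugate (constr_A n q \<alpha> k $$ (i,j)) * constr_A n q \<alpha> l $$ (a,b)))"
      using ij by (intro sum.cong refl) (simp add: sum_distrib_left ac_simps)
    finally show "?T i j a b = (\<Sum>k<m. \<Sum>l<m. ?H $$ (k,l) * (conjugate (constr_A n q \<alpha> k $$ (i,j)) * constr_A n q \<alpha> l $$ (a,b)))" .
  qed auto
  thus ?thesis by (rule minimalI[OF lin mD])
qed


lemma BC: assumes lin: "lin_map n q \<L>" and st: "star_linear q \<L>"
  and mD: "m = mdim n q (blocks n q \<L>)" and mh: "minimal_hill_rep n q \<L> m' A H"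
  shows "m' = m \<and> mspan n q (A ` {..<m'}) = mspan n q (blocks n q \<L>) \<and>
    (\<exists>Lf \<alpha> \<beta>. constr_data n q \<L> m Lf \<alpha> \<beta> \<and> (\<forall>k<m. A k = constr_A n q \<alpha> k) \<and> H = constr_H n q m Lf \<beta>)"
proof -
  let ?B = "blocks n q \<L>"
  let ?T = "Tt \<L> q"
  have h: "hill_rep n q \<L> m' A H" and mn: "\<And>m'' A' H'. hill_rep n q \<L> m'' A' H' \<Longrightarrow> m' \<le> m''"
    using mh unfolding minimal_hill_rep_def by auto
  have le1: "m \<le> m'" using MIN[OF lin h] mD by simp
  obtain g where g: "\<forall>k<m. g k \<in> carrier_mat n q" "mspan n q (g ` {..<m}) = mspan n q ?B"
    using DL2'[OF blocks_finite blocks_carrier, of n q \<L>] mD by auto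
  obtain H0 where "hill_rep n q \<L> m g H0" using DPART[OF lin st mD g] by blast
  hence "m' \<le> m" by (rule mn)
  hence mm: "m' = m" using le1 by simp
  have hh: "(\<forall>k<m. A k \<in> carrier_mat n q) \<and> H \<in> carrier_mat m m \<and>
    (\<forall>i<n. \<forall>j<q. \<forall>a<n. \<forall>b<q. ?T i j a b =
       (\<Sum>k<m. \<Sum>l<m. H$$(k,l) * (conjugate (A k $$ (i,j)) * A l $$ (a,b))))"
    using h hill_iff[OF lin] mm by blast
  have Ac: "\<forall>k<m. A k \<in> carrier_mat n q" and Hc: "H \<in> carrier_mat m m" using hh by auto
  have T: "\<And>i j a b. i<n \<Longrightarrow> j<q \<Longrightarrow> a<n \<Longrightarrow> b<q \<Longrightarrow> ?T i j a b =
       (\<Sum>k<m. \<Sum>l<m. H$$(k,l) * (conjugate (A k $$ (i,j)) * A l $$ (a,b)))" using hh by blast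
  define G where "G k = mat n q (\<lambda>(a,b). \<Sum>l<m. H$$(k,l) * A l $$ (a,b))" for k
  have Gc: "\<forall>k<m. G k \<in> carrier_mat n q" by (simp add: G_def)
  have Gi: "G k $$ (a,b) = (\<Sum>l<m. H$$(k,l) * A l $$ (a,b))" if "a < n" "b < q" for k a b
    using that by (simp add: G_def)
  have TG: "?T i j a b = (\<Sum>k<m. conjugate (A k $$ (i,j)) * G k $$ (a,b))" if ij: "i<n" "j<q" "a<n" "b<q" for i j a b
    using T[OF ij] ij by (simp add: Gi sum_distrib_left ac_simps)
  have BG: "?B \<subseteq> mspan n q (G ` {..<m})" by (rule block_in_mspan[OF lin Gc TG])
  have "mspan n q (G ` {..<m}) = mspan n q ?B \<and> mindep n q G {..<m}"
    using DL3'[OF blocks_finite blocks_carrier, of n q \<L> G] Gc BG mD by simp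
  hence spG: "mspan n q (G ` {..<m}) = mspan n q ?B" and mdG: "mindep n q G {..<m}" by auto
  have TA: "?T i j a b = (\<Sum>l<m. (\<Sum>k<m. H$$(k,l) * conjugate (A k $$ (i,j))) * A l $$ (a,b))"
    if ij: "i<n" "j<q" "a<n" "b<q" for i j a b
  proof -
    have "?T i j a b = (\<Sum>k<m. \<Sum>l<m. H$$(k,l) * (conjugate (A k $$ (i,j)) * A l $$ (a,b)))" by (rule T[OF ij])
    also have "\<dots> = (\<Sum>l<m. \<Sum>k<m. H$$(k,l) * (conjugate (A k $$ (i,j)) * A l $$ (a,b)))" by (rule sum.swap)
    also have "\<dots> = (\<Sum>l<m. (\<Sum>k<m. H$$(k,l) * conjugate (A k $$ (i,j))) * A l $$ (a,b))"
      by (intro sum.cong refl) (simp add: sum_distrib_right sum_distrib_left ac_simps)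
    finally show ?thesis .
  qed
  have BA: "?B \<subseteq> mspan n q (A ` {..<m})" by (rule block_in_mspan[OF lin Ac TA])
  have "mspan n q (A ` {..<m}) = mspan n q ?B \<and> mindep n q A {..<m}"
    using DL3'[OF blocks_finite blocks_carrier, of n q \<L> A] Ac BA mD by simp
  hence spA: "mspan n q (A ` {..<m}) = mspan n q ?B" and mdA: "mindep n q A {..<m}" by auto
  have mdcA: "mindep n q (\<lambda>k. cmat n q (A k)) {..<m}" by (rule mindep_conj[OF mdA])
  have dz: "\<forall>l<m. (\<Sum>k<m. (H$$(k,l) - conjugate (H$$(l,k))) * conjugate (A k $$ (i,j))) = 0"
    if ij: "i<n" "j<q" for i j
  proof -
    have "\<forall>a<n. \<forall>b<q. (\<Sum>l\<in>{..<m}. (\<Sum>k<m. (H$$(k,l) - conjugate (H$$(l,k))) * conjugate (A k $$ (i,j))) * A l $$ (a,b)) = 0"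
    proof (intro allI impI)
      fix a b assume ab: "a < n" "b < q"
      have e1: "(\<Sum>l<m. (\<Sum>k<m. H$$(k,l) * conjugate (A k $$ (i,j))) * A l $$ (a,b)) = ?T i j a b"
        using TA[OF ij ab] by simp
      have "?T a b i j = (\<Sum>l<m. \<Sum>k<m. H$$(l,k) * (conjugate (A l $$ (a,b)) * A k $$ (i,j)))" by (rule T[OF ab ij])
      hence "conjugate (?T a b i j) = (\<Sum>l<m. \<Sum>k<m. conjugate (H$$(l,k)) * (A l $$ (a,b) * conjugate (A k $$ (i,j))))"
        by (simp add: sum_conjugate conjugate_dist_mul)
      moreover have "conjugate (?T a b i j) = ?T i j a b" using Tt_herm2[OF lin st ij ab] by simp
      ultimately have e2: "(\<Sum>l<m. (\<Sum>k<m. conjugate (H$$(l,k)) * conjugate (A k $$ (i,j))) * A l $$ (a,b)) = ?T i j a b"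
        by (simp add: sum_distrib_right sum_distrib_left ac_simps)
      have "(\<Sum>l\<in>{..<m}. (\<Sum>k<m. (H$$(k,l) - conjugate (H$$(l,k))) * conjugate (A k $$ (i,j))) * A l $$ (a,b)) =
        (\<Sum>l<m. (\<Sum>k<m. H$$(k,l) * conjugate (A k $$ (i,j))) * A l $$ (a,b)) -
        (\<Sum>l<m. (\<Sum>k<m. conjugate (H$$(l,k)) * conjugate (A k $$ (i,j))) * A l $$ (a,b))"
        by (simp add: sum_subtractf left_diff_distrib)
      also have "\<dots> = 0" using e1 e2 by simp
      finally show "(\<Sum>l\<in>{..<m}. (\<Sum>k<m. (H$$(k,l) - conjugate (H$$(l,k))) * conjugate (A k $$ (i,j))) * A l $$ (a,b)) = 0" .
    qed
    from mindep_zero[OF mdA this] show ?thesis by simp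
  qed
  have herm_H: "H$$(k,l) = conjugate (H$$(l,k))" if kl: "k < m" "l < m" for k l
  proof -
    have "\<forall>i<n. \<forall>j<q. (\<Sum>k\<in>{..<m}. (H$$(k,l) - conjugate (H$$(l,k))) * cmat n q (A k) $$ (i,j)) = 0"
      using dz kl by simp
    from mindep_zero[OF mdcA this] kl show ?thesis by simp
  qed
  define \<alpha> where "\<alpha> i j k = conjugate (A k $$ (i,j))" for i j k
  have "\<forall>k<m. \<exists>\<beta>. \<forall>a<n. \<forall>b<q. G k $$ (a,b) = (\<Sum>i<n. \<Sum>j<q. \<beta> i j * ?T i j a b)"
  proof (intro allI impI)
    fix k assume k: "k < m"
    have "G k \<in> mspan n q ?B" using spG k mspan_own[of "G ` {..<m}" n q] Gc by auto
    hence "G k \<in> carrier_mat n q \<and> (\<exists>\<beta>. \<forall>a<n. \<forall>b<q. G k $$ (a,b) = (\<Sum>i<n. \<Sum>j<q. \<beta> i j * ?T i j a b))"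
      by (simp only: mspan_blocks_iff[OF lin])
    thus "\<exists>\<beta>. \<forall>a<n. \<forall>b<q. G k $$ (a,b) = (\<Sum>i<n. \<Sum>j<q. \<beta> i j * ?T i j a b)" by blast
  qed
  from choice1[OF this] obtain \<beta> where \<beta>: "\<forall>k<m. \<forall>a<n. \<forall>b<q. G k $$ (a,b) = (\<Sum>i<n. \<Sum>j<q. \<beta> k i j * ?T i j a b)"
    by (erule exE)
  have cd: "constr_data n q \<L> m G \<alpha> \<beta>" unfolding constr_data_def
  proof (intro conjI Gc spG allI impI)
    fix i j a b assume ij: "i<n" "j<q" "a<n" "b<q"
    show "mat_block n q \<L> i j $$ (a,b) = (\<Sum>k<m. \<alpha> i j k * G k $$ (a,b))"
      using TG[OF ij] block_entry[OF lin ij] by (simp add: \<alpha>_def)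
  next
    fix k a b assume kab: "k<m" "a<n" "b<q"
    have "G k $$ (a,b) = (\<Sum>i<n. \<Sum>j<q. \<beta> k i j * ?T i j a b)" using \<beta> kab by simp
    also have "\<dots> = (\<Sum>i<n. \<Sum>j<q. \<beta> k i j * mat_block n q \<L> i j $$ (a,b))"
      using kab by (intro sum.cong refl) (simp add: block_entry[OF lin])
    finally show "G k $$ (a,b) = (\<Sum>i<n. \<Sum>j<q. \<beta> k i j * mat_block n q \<L> i j $$ (a,b))" .
  qed
  have kron: "(\<Sum>i<n. \<Sum>j<q. \<beta> k i j * \<alpha> i j p) = (if k = p then 1 else 0)" if kp: "k < m" "p < m" for k p
  proof -
    define e where "e p' = (\<Sum>i<n. \<Sum>j<q. \<beta> k i j * \<alpha> i j p') - (if k = p' then 1 else 0)" for p'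
    have "\<forall>a<n. \<forall>b<q. (\<Sum>p'\<in>{..<m}. e p' * G p' $$ (a,b)) = 0"
    proof (intro allI impI)
      fix a b assume ab: "a < n" "b < q"
      have "(\<Sum>p'<m. (\<Sum>i<n. \<Sum>j<q. \<beta> k i j * \<alpha> i j p') * G p' $$ (a,b)) =
        (\<Sum>p'<m. \<Sum>i<n. \<Sum>j<q. \<beta> k i j * (\<alpha> i j p' * G p' $$ (a,b)))"
        by (simp add: sum_distrib_right sum_distrib_left ac_simps)
      also have "\<dots> = (\<Sum>i<n. \<Sum>j<q. \<Sum>p'<m. \<beta> k i j * (\<alpha> i j p' * G p' $$ (a,b)))"
        by (rule sum3_swap[symmetric])
      also have "\<dots> = (\<Sum>i<n. \<Sum>j<q. \<beta> k i j * ?T i j a b)"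
        using ab by (intro sum.cong refl) (simp add: TG \<alpha>_def sum_distrib_left)
      also have "\<dots> = G k $$ (a,b)" using \<beta> kp ab by simp
      finally have s1: "(\<Sum>p'<m. (\<Sum>i<n. \<Sum>j<q. \<beta> k i j * \<alpha> i j p') * G p' $$ (a,b)) = G k $$ (a,b)" .
      have s2: "(\<Sum>p'<m. (if k = p' then 1 else 0) * G p' $$ (a,b)) = G k $$ (a,b)"
      proof -
        have "(\<Sum>p'<m. (if k = p' then 1 else 0) * G p' $$ (a,b)) = (\<Sum>p'<m. if k = p' then G p' $$ (a,b) else 0)"
          by (intro sum.cong refl) simp
        also have "\<dots> = G k $$ (a,b)" using kp by (simp add: sum.delta')
        finally show ?thesis .
      qed
      show "(\<Sum>p'\<in>{..<m}. e p' * G p' $$ (a,b)) = 0"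
        unfolding e_def using s1 s2 by (simp add: left_diff_distrib sum_subtractf)
    qed
    from mindep_zero[OF mdG this] kp show ?thesis by (simp add: e_def)
  qed
  have Aeq: "\<forall>k<m. A k = constr_A n q \<alpha> k"
  proof (intro allI impI)
    fix k assume k: "k < m"
    have Akc: "A k \<in> carrier_mat n q" using Ac k by simp
    show "A k = constr_A n q \<alpha> k" by (rule eq_matI) (use Akc in \<open>auto simp: \<alpha>_def constr_A_def\<close>)
  qed
  have Heq: "H = constr_H n q m G \<beta>"
  proof (rule eq_matI)
    fix k l assume "k < dim_row (constr_H n q m G \<beta>)" "l < dim_col (constr_H n q m G \<beta>)"
    hence kl: "k < m" "l < m" by (auto simp: constr_H_def)
    have "constr_H n q m G \<beta> $$ (k,l) = (\<Sum>i<n. \<Sum>j<q. \<beta> k i j * conjugate (G l $$ (i,j)))"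
      using kl by (rule constrH_index)
    also have "\<dots> = (\<Sum>i<n. \<Sum>j<q. \<Sum>p<m. \<beta> k i j * (conjugate (H$$(l,p)) * \<alpha> i j p))"
      by (intro sum.cong refl) (simp add: Gi sum_conjugate conjugate_dist_mul sum_distrib_left \<alpha>_def)
    also have "\<dots> = (\<Sum>p<m. \<Sum>i<n. \<Sum>j<q. \<beta> k i j * (conjugate (H$$(l,p)) * \<alpha> i j p))"
      by (rule sum3_swap)
    also have "\<dots> = (\<Sum>p<m. conjugate (H$$(l,p)) * (\<Sum>i<n. \<Sum>j<q. \<beta> k i j * \<alpha> i j p))"
      by (intro sum.cong refl) (simp add: sum_distrib_left ac_simps)
    also have "\<dots> = (\<Sum>p<m. conjugate (H$$(l,p)) * (if k = p then 1 else 0))"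
      using kl kron by (intro sum.cong refl) simp
    also have "\<dots> = (\<Sum>p<m. if k = p then conjugate (H$$(l,p)) else 0)" by (intro sum.cong refl) simp
    also have "\<dots> = conjugate (H$$(l,k))" using kl by (simp add: sum.delta')
    also have "\<dots> = H $$ (k,l)" using herm_H[OF kl] by simp
    finally show "H $$ (k,l) = constr_H n q m G \<beta> $$ (k,l)" by simp
  qed (use Hc in \<open>auto simp: constr_H_def\<close>)
  show ?thesis using mm spA cd Aeq Heq by blast
qed


theorem theorem1p1:
  fixes \<L> :: "'a::conjugatable_field mat \<Rightarrow> 'a mat" and n q m :: nat
  assumes lin: "lin_map n q \<L>"
    and star: "star_linear q \<L>"
    and m_def: "m = vec_space.rank (q*n) (choi n q \<L>)"
  shows
    "(\<forall>Lf \<alpha> \<beta>. constr_data n q \<L> m Lf \<alpha> \<beta> \<longrightarrow>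
        minimal_hill_rep n q \<L> m (constr_A n q \<alpha>) (constr_H n q m Lf \<beta>))
   \<and> (\<forall>m' A H. minimal_hill_rep n q \<L> m' A H \<longrightarrow>
        (\<exists>Lf \<alpha> \<beta>. constr_data n q \<L> m Lf \<alpha> \<beta> \<and> m' = m \<and>
           (\<forall>k < m. A k = constr_A n q \<alpha> k) \<and> H = constr_H n q m Lf \<beta>))
   \<and> (\<forall>m' A H. minimal_hill_rep n q \<L> m' A H \<longrightarrow>
        mspan n q (A ` {..<m'}) = mspan n q (blocks n q \<L>))
   \<and> (\<forall>A. (\<forall>k < m. A k \<in> carrier_mat n q) \<and>
          mspan n q (A ` {..<m}) = mspan n q (blocks n q \<L>) \<longrightarrow>
        (\<exists>H. minimal_hill_rep n q \<L> m A H))"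
proof -
  have mD: "m = mdim n q (blocks n q \<L>)" using m_def rank_mdim[OF lin] by simp
  have a: "\<forall>Lf \<alpha> \<beta>. constr_data n q \<L> m Lf \<alpha> \<beta> \<longrightarrow>
        minimal_hill_rep n q \<L> m (constr_A n q \<alpha>) (constr_H n q m Lf \<beta>)"
  proof (intro allI impI)
    fix Lf \<alpha> \<beta> assume cd: "constr_data n q \<L> m Lf \<alpha> \<beta>"
    show "minimal_hill_rep n q \<L> m (constr_A n q \<alpha>) (constr_H n q m Lf \<beta>)" by (rule APART[OF lin star mD cd])
  qed
  have b: "\<forall>m' A H. minimal_hill_rep n q \<L> m' A H \<longrightarrow>
        (\<exists>Lf \<alpha> \<beta>. constr_data n q \<L> m Lf \<alpha> \<beta> \<and> m' = m \<and>
           (\<forall>k < m. A k = constr_A n q \<alpha> k) \<and> H = constr_H n q m Lf \<beta>)"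
  proof (intro allI impI)
    fix m' A H assume mh: "minimal_hill_rep n q \<L> m' A H"
    have bc: "m' = m \<and> mspan n q (A ` {..<m'}) = mspan n q (blocks n q \<L>) \<and>
      (\<exists>Lf \<alpha> \<beta>. constr_data n q \<L> m Lf \<alpha> \<beta> \<and> (\<forall>k<m. A k = constr_A n q \<alpha> k) \<and> H = constr_H n q m Lf \<beta>)"
      by (rule BC[OF lin star mD mh])
    hence mm: "m' = m" by (rule conjunct1)
    from bc obtain Lf \<alpha> \<beta> where "constr_data n q \<L> m Lf \<alpha> \<beta>" "\<forall>k<m. A k = constr_A n q \<alpha> k" "H = constr_H n q m Lf \<beta>"
      by blast
    thus "\<exists>Lf \<alpha> \<beta>. constr_data n q \<L> m Lf \<alpha> \<beta> \<and> m' = m \<and>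
           (\<forall>k < m. A k = constr_A n q \<alpha> k) \<and> H = constr_H n q m Lf \<beta>" using mm by blast
  qed
  have c: "\<forall>m' A H. minimal_hill_rep n q \<L> m' A H \<longrightarrow>
        mspan n q (A ` {..<m'}) = mspan n q (blocks n q \<L>)"
  proof (intro allI impI)
    fix m' A H assume mh: "minimal_hill_rep n q \<L> m' A H"
    have bc: "m' = m \<and> mspan n q (A ` {..<m'}) = mspan n q (blocks n q \<L>) \<and>
      (\<exists>Lf \<alpha> \<beta>. constr_data n q \<L> m Lf \<alpha> \<beta> \<and> (\<forall>k<m. A k = constr_A n q \<alpha> k) \<and> H = constr_H n q m Lf \<beta>)"
      by (rule BC[OF lin star mD mh])
    thus "mspan n q (A ` {..<m'}) = mspan n q (blocks n q \<L>)" by (rule conjunct2[THEN conjunct1])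
  qed
  have d: "\<forall>A. (\<forall>k < m. A k \<in> carrier_mat n q) \<and>
          mspan n q (A ` {..<m}) = mspan n q (blocks n q \<L>) \<longrightarrow>
        (\<exists>H. minimal_hill_rep n q \<L> m A H)"
  proof (intro allI impI)
    fix A assume h: "(\<forall>k < m. A k \<in> carrier_mat n q) \<and> mspan n q (A ` {..<m}) = mspan n q (blocks n q \<L>)"
    have A1: "\<forall>k < m. A k \<in> carrier_mat n q" using h by (rule conjunct1)
    have A2: "mspan n q (A ` {..<m}) = mspan n q (blocks n q \<L>)" using h by (rule conjunct2)
    obtain H where "hill_rep n q \<L> m A H" using DPART[OF lin star mD A1 A2] by blast
    hence "minimal_hill_rep n q \<L> m A H" by (rule minimalI[OF lin mD])
    thus "\<exists>H. minimal_hill_rep n q \<L> m A H" by blast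
  qed
  show ?thesis using a b c d by (intro conjI)
qed


end
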